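(* Suppose that a long theta with apexes $u$ and $v$ is the underlying graph of some oriented graph $G$ derived from a Burling tree $(T,r,\ell,c)$. Then for every hole $H$ of $G$, exactly one of $u$ and $v$ is the pivot of $H$.
   Context: Graphs are finite, without loops or multiple edges; oriented graphs have no pair of opposite arcs. A hole is an induced cycle of length at least $4$. A theta is a graph made of three internally vertex-disjoint paths of length at least $2$, each linking two vertices $u$ and $v$ (the apexes), with no edges other than those of the three paths. A long theta is a theta in which all three paths have length at least $3$. In a rooted tree $T$ with root $r$, each non-root vertex $v$ has a parent $p(v)$; children, leaves, ancestors and descendants are as usual. A branch is a sequence $v_1\dots v_k$ ($k\ge0$) with $v_i$ the parent of $v_{i+1}$; it starts at $v_1$. A Burling tree is a 4-tuple $(T,r,\ell,c)$: $T$ a rooted tree with root $r$; $\ell$ assigns to each non-leaf vertex $v$ one of its children $\ell(v)$ (the last-born of $v$); $c$ assigns to every vertex $v$ that is neither the root nor a last-born the vertex-set of a (possibly empty) branch starting at $\ell(p(v))$, and $c(v)=\emptyset$ if $v$ is the root or a last-born. The oriented graph fully derived from it has vertex-set $V(T)$ and an arc $uv$ iff $v\in c(u)$; an oriented graph is derived from the Burling tree if it is an induced subgraph of the fully derived one. A hole of an oriented graph means a hole of its underlying graph. If $G$ is derived from $T$ and $H$ is a hole of $G$, then (as established in the paper) $H$ with the inherited orientation has exactly two sources, called its antennas, and exactly two sinks; exactly one of these sinks is adjacent to both antennas and is an ancestor in $T$ of all vertices of $H$ other than the antennas: it is the pivot of $H$. *)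

theory Defs
  imports Main
begin

text \<open>A rooted tree on the finite vertex set V with root r and parent function p:
 every non-root vertex has its parent in V, and iterating the parent map from any
 vertex reaches the root. (The value p r is irrelevant.)\<close>
definition rooted_tree :: "'a set \<Rightarrow> 'a \<Rightarrow> ('a \<Rightarrow> 'a) \<Rightarrow> bool" where
  "rooted_tree V r p \<longleftrightarrow> finite V \<and> r \<in> V \<and> (\<forall>v\<in>V. v \<noteq> r \<longrightarrow> p v \<in> V)
     \<and> (\<forall>v\<in>V. \<exists>k. (p ^^ k) v = r)"

definition ancestor :: "'a \<Rightarrow> ('a \<Rightarrow> 'a) \<Rightarrow> 'a \<Rightarrow> 'a \<Rightarrow> bool" where
  "ancestor r p x y \<longleftrightarrow> (\<exists>k. x = (p ^^ k) y \<and> (\<forall>i<k. (p ^^ i) y \<noteq> r))"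

definition is_leaf :: "'a set \<Rightarrow> 'a \<Rightarrow> ('a \<Rightarrow> 'a) \<Rightarrow> 'a \<Rightarrow> bool" where
  "is_leaf V r p v \<longleftrightarrow> \<not> (\<exists>w\<in>V. w \<noteq> r \<and> p w = v)"

definition is_branch :: "'a set \<Rightarrow> 'a \<Rightarrow> ('a \<Rightarrow> 'a) \<Rightarrow> 'a list \<Rightarrow> bool" where
  "is_branch V r p xs \<longleftrightarrow> set xs \<subseteq> V \<and>
     (\<forall>i. Suc i < length xs \<longrightarrow> xs ! Suc i \<noteq> r \<and> p (xs ! Suc i) = xs ! i)"

definition is_last_born :: "'a \<Rightarrow> ('a \<Rightarrow> 'a) \<Rightarrow> ('a \<Rightarrow> 'a) \<Rightarrow> 'a \<Rightarrow> bool" where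
  "is_last_born r p l v \<longleftrightarrow> v \<noteq> r \<and> l (p v) = v"

definition burling_tree ::
  "'a set \<Rightarrow> 'a \<Rightarrow> ('a \<Rightarrow> 'a) \<Rightarrow> ('a \<Rightarrow> 'a) \<Rightarrow> ('a \<Rightarrow> 'a set) \<Rightarrow> bool" where
  "burling_tree V r p l c \<longleftrightarrow> rooted_tree V r p
     \<and> (\<forall>v\<in>V. \<not> is_leaf V r p v \<longrightarrow> l v \<in> V \<and> l v \<noteq> r \<and> p (l v) = v)
     \<and> (\<forall>v\<in>V. (v = r \<or> is_last_born r p l v) \<longrightarrow> c v = {})
     \<and> (\<forall>v\<in>V. v \<noteq> r \<and> \<not> is_last_born r p l v \<longrightarrow>
          (\<exists>xs. is_branch V r p xs \<and> (xs = [] \<or> hd xs = l (p v)) \<and> c v = set xs))"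

definition darc :: "('a \<Rightarrow> 'a set) \<Rightarrow> 'a set \<Rightarrow> 'a \<Rightarrow> 'a \<Rightarrow> bool" where
  "darc c S x y \<longleftrightarrow> x \<in> S \<and> y \<in> S \<and> y \<in> c x"

definition uadj :: "('a \<Rightarrow> 'a set) \<Rightarrow> 'a set \<Rightarrow> 'a \<Rightarrow> 'a \<Rightarrow> bool" where
  "uadj c S x y \<longleftrightarrow> darc c S x y \<or> darc c S y x"

definition consec :: "'a list \<Rightarrow> 'a \<Rightarrow> 'a \<Rightarrow> bool" where
  "consec P x y \<longleftrightarrow> (\<exists>i. Suc i < length P \<and> {P ! i, P ! Suc i} = {x, y})"

definition is_path_between :: "('a \<Rightarrow> 'a \<Rightarrow> bool) \<Rightarrow> 'a list \<Rightarrow> 'a \<Rightarrow> 'a \<Rightarrow> bool" where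
  "is_path_between A P u v \<longleftrightarrow> P \<noteq> [] \<and> distinct P \<and> hd P = u \<and> last P = v
     \<and> (\<forall>i. Suc i < length P \<longrightarrow> A (P ! i) (P ! Suc i))"

text \<open>The graph (S, A) is a long theta with apexes u, v: it consists of three internally
 vertex-disjoint u-v paths, each of length (number of edges) at least 3, and has no
 edges other than those of the three paths.\<close>
definition long_theta :: "'a set \<Rightarrow> ('a \<Rightarrow> 'a \<Rightarrow> bool) \<Rightarrow> 'a \<Rightarrow> 'a \<Rightarrow> bool" where
  "long_theta S A u v \<longleftrightarrow> (\<exists>P1 P2 P3.
     is_path_between A P1 u v \<and> is_path_between A P2 u v \<and> is_path_between A P3 u v
     \<and> length P1 \<ge> 4 \<and> length P2 \<ge> 4 \<and> length P3 \<ge> 4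
     \<and> set P1 \<inter> set P2 = {u, v} \<and> set P1 \<inter> set P3 = {u, v} \<and> set P2 \<inter> set P3 = {u, v}
     \<and> S = set P1 \<union> set P2 \<union> set P3
     \<and> (\<forall>x\<in>S. \<forall>y\<in>S. A x y \<longleftrightarrow> (consec P1 x y \<or> consec P2 x y \<or> consec P3 x y)))"

definition is_hole :: "'a set \<Rightarrow> ('a \<Rightarrow> 'a \<Rightarrow> bool) \<Rightarrow> 'a set \<Rightarrow> bool" where
  "is_hole S A H \<longleftrightarrow> (\<exists>cs. distinct cs \<and> length cs \<ge> 4 \<and> set cs = H \<and> H \<subseteq> S
     \<and> (\<forall>i<length cs. \<forall>j<length cs. A (cs ! i) (cs ! j) \<longleftrightarrow>
          (j = Suc i mod length cs \<or> i = Suc j mod length cs)))"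

definition hole_source :: "('a \<Rightarrow> 'a set) \<Rightarrow> 'a set \<Rightarrow> 'a set \<Rightarrow> 'a \<Rightarrow> bool" where
  "hole_source c S H x \<longleftrightarrow> x \<in> H \<and> (\<forall>y\<in>H. uadj c S x y \<longrightarrow> darc c S x y)"

definition hole_sink :: "('a \<Rightarrow> 'a set) \<Rightarrow> 'a set \<Rightarrow> 'a set \<Rightarrow> 'a \<Rightarrow> bool" where
  "hole_sink c S H x \<longleftrightarrow> x \<in> H \<and> (\<forall>y\<in>H. uadj c S x y \<longrightarrow> darc c S y x)"

definition is_pivot ::
  "'a \<Rightarrow> ('a \<Rightarrow> 'a) \<Rightarrow> ('a \<Rightarrow> 'a set) \<Rightarrow> 'a set \<Rightarrow> 'a set \<Rightarrow> 'a \<Rightarrow> bool" where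
  "is_pivot r p c S H x \<longleftrightarrow> hole_sink c S H x
     \<and> (\<forall>a. hole_source c S H a \<longrightarrow> uadj c S x a)
     \<and> (\<forall>w\<in>H. \<not> hole_source c S H w \<longrightarrow> ancestor r p x w)"

end

theory Submission
  imports Defs
begin

locale bt =
  fixes V :: "'a set" and r :: 'a and p l :: "'a \<Rightarrow> 'a" and c :: "'a \<Rightarrow> 'a set"
  assumes BT: "burling_tree V r p l c"
begin

lemma fpS: "(f^^(Suc n)) x = (f^^n) (f x)" by (simp only: funpow_Suc_right comp_apply)
lemma fp: "(f^^(m+n)) x = (f^^m) ((f^^n) x)" by (simp add: funpow_add)

abbreviation anc where "anc x y \<equiv> ancestor r p x y"

lemma rt: "rooted_tree V r p" using BT unfolding burling_tree_def by blast
lemma finV: "finite V" and rV: "r \<in> V" and pV: "\<And>v. v \<in> V \<Longrightarrow> v \<noteq> r \<Longrightarrow> p v \<in> V"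
  and reach: "\<And>v. v \<in> V \<Longrightarrow> \<exists>k. (p ^^ k) v = r"
  using rt unfolding rooted_tree_def by blast+

lemma funpow_in_V: "y \<in> V \<Longrightarrow> \<forall>i<k. (p^^i) y \<noteq> r \<Longrightarrow> (p^^k) y \<in> V"
proof (induction k)
  case 0 then show ?case by simp
next
  case (Suc k)
  then have "(p^^k) y \<in> V" "(p^^k) y \<noteq> r" by auto
  then show ?case using pV by simp
qed

lemma anc_in_V: "anc x y \<Longrightarrow> y \<in> V \<Longrightarrow> x \<in> V"
  unfolding ancestor_def using funpow_in_V by blast

lemma anc_refl[simp]: "anc x x"
  unfolding ancestor_def by (rule exI[of _ 0]) simp

lemma anc_trans: assumes "anc x y" "anc y z" shows "anc x z"
proof -
  obtain k where k: "x = (p^^k) y" "\<forall>i<k. (p^^i) y \<noteq> r" using assms(1) unfolding ancestor_def by blast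
  obtain m where m: "y = (p^^m) z" "\<forall>i<m. (p^^i) z \<noteq> r" using assms(2) unfolding ancestor_def by blast
  have "x = (p^^(k+m)) z" using k m by (simp add: fp)
  moreover have "\<forall>i<k+m. (p^^i) z \<noteq> r"
  proof (intro allI impI)
    fix i assume "i < k+m"
    show "(p^^i) z \<noteq> r"
    proof (cases "i < m")
      case True then show ?thesis using m(2) by blast
    next
      case False
      then have "i = (i-m) + m" by simp
      then have "(p^^i) z = (p^^(i-m)) ((p^^m) z)" by (metis fp)
      then have "(p^^i) z = (p^^(i-m)) y" using m(1) by simp
      then show ?thesis using k False \<open>i<k+m\<close> by auto
    qed
  qed
  ultimately show ?thesis unfolding ancestor_def by blast
qed

lemma anc_step: assumes "y \<noteq> r" shows "anc x y \<longleftrightarrow> x = y \<or> anc x (p y)"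
proof
  assume "anc x y"
  then obtain k where k: "x = (p^^k) y" "\<forall>i<k. (p^^i) y \<noteq> r" unfolding ancestor_def by blast
  show "x = y \<or> anc x (p y)"
  proof (cases k)
    case 0 then show ?thesis using k by simp
  next
    case (Suc k')
    have "x = (p^^k') (p y)" using k Suc by (simp only: fpS)
    moreover have "\<forall>i<k'. (p^^i) (p y) \<noteq> r"
    proof (intro allI impI)
      fix i assume "i < k'"
      then have "Suc i < k" using Suc by simp
      then have "(p^^(Suc i)) y \<noteq> r" using k(2) by blast
      then show "(p^^i) (p y) \<noteq> r" unfolding fpS .
    qed
    ultimately show ?thesis unfolding ancestor_def by blast
  qed
next
  assume "x = y \<or> anc x (p y)"
  then show "anc x y"
  proof
    assume "x = y" then show ?thesis by simp
  next
    assume "anc x (p y)"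
    then obtain k where k: "x = (p^^k) (p y)" "\<forall>i<k. (p^^i) (p y) \<noteq> r" unfolding ancestor_def by blast
    have "x = (p^^(Suc k)) y" using k by (simp only: fpS)
    moreover have "\<forall>i<Suc k. (p^^i) y \<noteq> r"
    proof (intro allI impI)
      fix i assume "i < Suc k"
      show "(p^^i) y \<noteq> r"
      proof (cases i)
        case 0 then show ?thesis using assms by simp
      next
        case (Suc j)
        then have "j < k" using \<open>i < Suc k\<close> by simp
        then have "(p^^j) (p y) \<noteq> r" using k(2) by blast
        then show ?thesis unfolding Suc fpS .
      qed
    qed
    ultimately show ?thesis unfolding ancestor_def by blast
  qed
qed

lemma anc_parent: "y \<noteq> r \<Longrightarrow> anc (p y) y"
  using anc_step by auto

lemma periodic: assumes "(p^^n) y = y" shows "(p^^(q*n)) y = y"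
  by (induction q) (simp_all add: funpow_add assms)

lemma anc_antisym: assumes "y \<in> V" "anc x y" "anc y x" shows "x = y"
proof (rule ccontr)
  assume ne: "x \<noteq> y"
  obtain k where k: "x = (p^^k) y" "\<forall>i<k. (p^^i) y \<noteq> r" using assms(2) unfolding ancestor_def by blast
  obtain m where m: "y = (p^^m) x" "\<forall>i<m. (p^^i) x \<noteq> r" using assms(3) unfolding ancestor_def by blast
  define n where "n = k + m"
  have kpos: "k > 0" using k ne by (cases k) auto
  have "(p^^n) y = (p^^m) ((p^^k) y)" unfolding n_def by (metis add.commute fp)
  also have "\<dots> = (p^^m) x" using k(1) by simp
  also have "\<dots> = y" using m(1) by simp
  finally have per: "(p^^n) y = y" .
  have nr: "\<forall>i<n. (p^^i) y \<noteq> r"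
  proof (intro allI impI)
    fix i assume "i < n"
    show "(p^^i) y \<noteq> r"
    proof (cases "i < k")
      case True then show ?thesis using k(2) by blast
    next
      case False
      then have "i = (i-k) + k" by simp
      then have "(p^^i) y = (p^^(i-k)) ((p^^k) y)" by (metis fp)
      then have "(p^^i) y = (p^^(i-k)) x" using k(1) by simp
      moreover have "i - k < m" using False \<open>i<n\<close> unfolding n_def by simp
      ultimately show ?thesis using m(2) by auto
    qed
  qed
  obtain K where K: "(p^^K) y = r" using reach assms(1) by blast
  have "n > 0" using kpos unfolding n_def by simp
  have "K = K mod n + (K div n)*n" by simp
  then have "(p^^K) y = (p^^(K mod n)) ((p^^((K div n)*n)) y)"
    using fp by metis
  also have "\<dots> = (p^^(K mod n)) y" using periodic[OF per] by simp
  finally have "(p^^(K mod n)) y = r" using K by simp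
  moreover have "K mod n < n" using \<open>n>0\<close> by simp
  ultimately show False using nr by blast
qed

lemma anc_total: assumes "anc a y" "anc b y" shows "anc a b \<or> anc b a"
proof -
  obtain i where i: "a = (p^^i) y" "\<forall>t<i. (p^^t) y \<noteq> r" using assms(1) unfolding ancestor_def by blast
  obtain j where j: "b = (p^^j) y" "\<forall>t<j. (p^^t) y \<noteq> r" using assms(2) unfolding ancestor_def by blast
  show ?thesis
  proof (cases "i \<le> j")
    case True
    have "j = (j-i) + i" using True by simp
    then have "(p^^j) y = (p^^(j-i)) ((p^^i) y)" by (metis fp)
    then have "b = (p^^(j-i)) a" using i(1) j(1) by simp
    moreover have "\<forall>t<j-i. (p^^t) a \<noteq> r"
    proof (intro allI impI)
      fix t assume "t < j - i"
      then have "t+i < j" by simp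
      then have "(p^^(t+i)) y \<noteq> r" using j(2) by blast
      then show "(p^^t) a \<noteq> r" using i(1) by (simp add: fp)
    qed
    ultimately show ?thesis unfolding ancestor_def by blast
  next
    case False
    have "i = (i-j) + j" using False by simp
    then have "(p^^i) y = (p^^(i-j)) ((p^^j) y)" by (metis fp)
    then have "a = (p^^(i-j)) b" using i(1) j(1) by simp
    moreover have "\<forall>t<i-j. (p^^t) b \<noteq> r"
    proof (intro allI impI)
      fix t assume "t < i - j"
      then have "t+j < i" by simp
      then have "(p^^(t+j)) y \<noteq> r" using i(2) by blast
      then show "(p^^t) b \<noteq> r" using j(1) by (simp add: fp)
    qed
    ultimately show ?thesis unfolding ancestor_def by blast
  qed
qed

lemma p_neq: assumes "y \<in> V" "y \<noteq> r" shows "p y \<noteq> y"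
proof
  assume "p y = y"
  then have "(p^^k) y = y" for k by (induction k) auto
  then show False using reach assms by metis
qed

lemma siblings_incomp: assumes "y1 \<in> V" "y2 \<in> V" "y1 \<noteq> r" "y2 \<noteq> r" "p y1 = p y2" "y1 \<noteq> y2"
  shows "\<not> anc y1 y2"
proof
  assume "anc y1 y2"
  then have "anc y1 (p y1)" using anc_step assms by metis
  then have "y1 = p y1" using anc_antisym[of "y1" "p y1"] anc_parent assms by (metis anc_in_V)
  then show False using p_neq assms by metis
qed

definition dep where "dep y = card {x. anc x y}"

lemma ancset_fin: assumes "y \<in> V" shows "finite {x. anc x y}"
proof -
  have "{x. anc x y} \<subseteq> V" using anc_in_V assms by blast
  then show ?thesis using finV finite_subset by blast
qed

lemma dep_less: assumes "y \<in> V" "anc x y" "x \<noteq> y" shows "dep x < dep y"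
proof -
  have "{w. anc w x} \<subseteq> {w. anc w y}" using assms(2) anc_trans by blast
  moreover have "y \<in> {w. anc w y}" by simp
  moreover have "y \<notin> {w. anc w x}"
  proof
    assume "y \<in> {w. anc w x}"
    then have "anc y x" by simp
    then show False using anc_antisym[OF assms(1,2)] assms(3) by blast
  qed
  ultimately have "{w. anc w x} \<subset> {w. anc w y}" by blast
  then show ?thesis unfolding dep_def using ancset_fin[OF assms(1)] psubset_card_mono by blast
qed

lemma dep_parent: assumes "y \<in> V" "y \<noteq> r" shows "dep y = Suc (dep (p y))"
proof -
  have "{x. anc x y} = insert y {x. anc x (p y)}" using anc_step[OF assms(2)] by auto
  moreover have "y \<notin> {x. anc x (p y)}"
  proof
    assume "y \<in> {x. anc x (p y)}"
    then have "anc y (p y)" by simp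
    then have "p y = y" using anc_antisym[of y "p y"] anc_parent[OF assms(2)] assms(1) by blast
    then show False using p_neq assms by blast
  qed
  moreover have "finite {x. anc x (p y)}" using ancset_fin pV assms by blast
  ultimately show ?thesis unfolding dep_def by simp
qed

end

context bt begin

lemma BT_l: "v \<in> V \<Longrightarrow> \<not> is_leaf V r p v \<Longrightarrow> l v \<in> V \<and> l v \<noteq> r \<and> p (l v) = v"
  using BT unfolding burling_tree_def by blast
lemma BT_c0: "v \<in> V \<Longrightarrow> v = r \<or> is_last_born r p l v \<Longrightarrow> c v = {}"
  using BT unfolding burling_tree_def by blast
lemma BT_cb: "v \<in> V \<Longrightarrow> v \<noteq> r \<Longrightarrow> \<not> is_last_born r p l v \<Longrightarrow>
    \<exists>xs. is_branch V r p xs \<and> (xs = [] \<or> hd xs = l (p v)) \<and> c v = set xs"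
  using BT unfolding burling_tree_def by blast

lemma lb_facts: assumes "x \<in> V" "x \<noteq> r"
  shows "p x \<in> V" "l (p x) \<in> V" "l (p x) \<noteq> r" "p (l (p x)) = p x"
proof -
  show "p x \<in> V" using pV assms by blast
  have "\<not> is_leaf V r p (p x)" unfolding is_leaf_def using assms by blast
  then show "l (p x) \<in> V" "l (p x) \<noteq> r" "p (l (p x)) = p x" using BT_l \<open>p x \<in> V\<close> by blast+
qed

lemma branch_anc: assumes "is_branch V r p xs" "j < length xs" "i \<le> j"
  shows "anc (xs!i) (xs!j)"
  using assms(2,3)
proof (induction j)
  case 0 then show ?case by simp
next
  case (Suc j)
  show ?case
  proof (cases "i = Suc j")
    case True then show ?thesis by simp
  next
    case False
    then have "anc (xs!i) (xs!j)" using Suc by simp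
    moreover have "xs ! Suc j \<noteq> r" "p (xs ! Suc j) = xs ! j" using assms(1) Suc.prems
      unfolding is_branch_def by blast+
    ultimately show ?thesis using anc_step by metis
  qed
qed

lemma branch_convex: assumes "is_branch V r p xs" "j < length xs" "anc (xs!0) w" "anc w (xs!j)"
  shows "w \<in> set xs"
  using assms(2,4)
proof (induction j)
  case 0
  have "xs!0 \<in> V" using assms(1) 0 unfolding is_branch_def by (meson nth_mem subsetD)
  then have "w = xs!0" using anc_antisym assms(3) 0 by metis
  then show ?case using 0 by simp
next
  case (Suc j)
  have "xs ! Suc j \<noteq> r" "p (xs ! Suc j) = xs ! j" using assms(1) Suc.prems
    unfolding is_branch_def by blast+
  then have "w = xs ! Suc j \<or> anc w (xs ! j)" using anc_step Suc.prems(2) by metis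
  then show ?case
  proof
    assume "w = xs ! Suc j" then show ?thesis using Suc.prems by simp
  next
    assume "anc w (xs ! j)" then show ?thesis using Suc by simp
  qed
qed

lemma arc_basic: assumes "x \<in> V" "y \<in> c x"
  shows "x \<noteq> r" "l (p x) \<noteq> x" "anc (l (p x)) y" "y \<in> V"
proof -
  show xr: "x \<noteq> r" using BT_c0 assms by blast
  show lx: "l (p x) \<noteq> x" using BT_c0 assms xr unfolding is_last_born_def by blast
  obtain xs where xs: "is_branch V r p xs" "xs = [] \<or> hd xs = l (p x)" "c x = set xs"
    using BT_cb[OF assms(1) xr] lx unfolding is_last_born_def by blast
  have ne: "xs \<noteq> []" using xs assms by auto
  then have h: "xs!0 = l (p x)" using xs by (simp add: hd_conv_nth)
  obtain j where j: "j < length xs" "xs!j = y" using xs(3) assms(2) by (metis in_set_conv_nth)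
  show "anc (l (p x)) y" using branch_anc[OF xs(1) j(1), of 0] h j by simp
  show "y \<in> V" using xs assms unfolding is_branch_def by blast
qed

lemma arc_chain: assumes "x \<in> V" "y \<in> c x" "z \<in> c x" shows "anc y z \<or> anc z y"
proof -
  have xr: "x \<noteq> r" "l (p x) \<noteq> x" using arc_basic assms by blast+
  obtain xs where xs: "is_branch V r p xs" "c x = set xs"
    using BT_cb[OF assms(1) xr(1)] xr(2) unfolding is_last_born_def by blast
  obtain i where i: "i < length xs" "xs!i = y" using xs(2) assms(2) by (metis in_set_conv_nth)
  obtain j where j: "j < length xs" "xs!j = z" using xs(2) assms(3) by (metis in_set_conv_nth)
  show ?thesis
  proof (cases "i \<le> j")
    case True then show ?thesis using branch_anc[OF xs(1) j(1) True] i j by simp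
  next
    case False then show ?thesis using branch_anc[OF xs(1) i(1), of j] i j by simp
  qed
qed

lemma arc_convex: assumes "x \<in> V" "y \<in> c x" "anc (l (p x)) w" "anc w y" shows "w \<in> c x"
proof -
  have xr: "x \<noteq> r" "l (p x) \<noteq> x" using arc_basic assms by blast+
  obtain xs where xs: "is_branch V r p xs" "xs = [] \<or> hd xs = l (p x)" "c x = set xs"
    using BT_cb[OF assms(1) xr(1)] xr(2) unfolding is_last_born_def by blast
  have ne: "xs \<noteq> []" using xs assms by auto
  then have h: "xs!0 = l (p x)" using xs by (simp add: hd_conv_nth)
  obtain j where j: "j < length xs" "xs!j = y" using xs(3) assms(2) by (metis in_set_conv_nth)
  show ?thesis using branch_convex[OF xs(1) j(1), of w] h j assms xs(3) by simp
qed

lemma lastborn_c: assumes "x \<in> V" "x \<noteq> r" shows "c (l (p x)) = {}"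
proof -
  have "l (p x) \<in> V" "l (p x) \<noteq> r" "p (l (p x)) = p x" using lb_facts assms by blast+
  then show ?thesis using BT_c0 unfolding is_last_born_def by simp
qed

lemma arc_incomp: assumes "x \<in> V" "y \<in> c x" shows "\<not> anc x y" "\<not> anc y x"
proof -
  have a: "x \<noteq> r" "l (p x) \<noteq> x" "anc (l (p x)) y" "y \<in> V" using arc_basic assms by blast+
  have lf: "l (p x) \<in> V" "l (p x) \<noteq> r" "p (l (p x)) = p x" using lb_facts assms a by blast+
  have sib1: "\<not> anc x (l (p x))" using siblings_incomp[of x "l (p x)"] assms a lf by metis
  have sib2: "\<not> anc (l (p x)) x" using siblings_incomp[of "l (p x)" x] assms a lf by metis
  show "\<not> anc x y"
  proof
    assume "anc x y"
    then have "anc x (l (p x)) \<or> anc (l (p x)) x" using anc_total a(3) by blast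
    then show False using sib1 sib2 by blast
  qed
  show "\<not> anc y x"
  proof
    assume "anc y x"
    then have "anc (l (p x)) x" using anc_trans a(3) by blast
    then show False using sib2 by blast
  qed
qed

lemma arc_irrefl: "x \<in> V \<Longrightarrow> x \<notin> c x"
  using arc_incomp anc_refl by blast

lemma arc_asym: assumes "x \<in> V" "y \<in> c x" shows "x \<notin> c y"
proof
  assume xy: "x \<in> c y"
  have a: "x \<noteq> r" "l (p x) \<noteq> x" "anc (l (p x)) y" "y \<in> V" using arc_basic assms by blast+
  have b: "y \<noteq> r" "l (p y) \<noteq> y" "anc (l (p y)) x" using arc_basic[OF a(4) xy] by blast+
  have lf: "l (p x) \<in> V" "l (p x) \<noteq> r" "p (l (p x)) = p x" using lb_facts assms a by blast+
  have "y \<noteq> l (p x)"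
  proof
    assume "y = l (p x)"
    then have "p y = p x" using lf by simp
    then show False using b(2) \<open>y = l (p x)\<close> by simp
  qed
  then have "anc (l (p x)) (p y)" using a(3) anc_step b(1) by metis
  moreover have "anc (p y) (l (p y))"
    using lb_facts[OF a(4) b(1)] anc_parent by metis
  ultimately have "anc (l (p x)) x" using b(3) anc_trans by metis
  moreover have "\<not> anc (l (p x)) x" using siblings_incomp[of "l (p x)" x] assms a lf by metis
  ultimately show False by blast
qed

lemma dep_sib: assumes "x \<in> V" "x \<noteq> r" shows "dep (l (p x)) = dep x"
  using dep_parent lb_facts assms by metis

lemma arc_dep: assumes "x \<in> V" "y \<in> c x"
  shows "dep x \<le> dep y" "dep x = dep y \<Longrightarrow> y = l (p x)"
proof -
  have a: "x \<noteq> r" "l (p x) \<noteq> x" "anc (l (p x)) y" "y \<in> V" using arc_basic assms by blast+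
  have d: "dep (l (p x)) = dep x" using dep_sib assms a by blast
  show "dep x \<le> dep y"
    using dep_less[OF a(4) a(3)] d by (cases "l (p x) = y") auto
  show "dep x = dep y \<Longrightarrow> y = l (p x)"
    using dep_less[OF a(4) a(3)] d by (cases "l (p x) = y") auto
qed

end

lemma anc_root: "ancestor r p x r \<Longrightarrow> x = r"
  unfolding ancestor_def by (metis funpow_0 neq0_conv)

locale bts = bt +
  fixes S assumes SV: "S \<subseteq> V"
begin

abbreviation A where "A \<equiv> uadj c S"
definition N where "N H x = {y \<in> H. A x y}"

definition cyc where "cyc H \<longleftrightarrow> finite H \<and> H \<subseteq> S \<and> (\<forall>x\<in>H. \<exists>y z. y \<noteq> z \<and> N H x = {y,z})
  \<and> (\<forall>X. (\<exists>x\<in>H. x\<in>X) \<and> (\<exists>x\<in>H. x\<notin>X) \<longrightarrow>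
       (\<exists>e1 e2 f1 f2. e1\<in>H \<and> e1\<in>X \<and> e2\<in>H \<and> e2\<notin>X \<and> A e1 e2 \<and>
          f1\<in>H \<and> f1\<in>X \<and> f2\<in>H \<and> f2\<notin>X \<and> A f1 f2 \<and> (e1\<noteq>f1 \<or> e2\<noteq>f2)))"

lemma A_sym: "A x y = A y x" unfolding uadj_def by blast
lemma A_S: "A x y \<Longrightarrow> x \<in> S \<and> y \<in> S" unfolding uadj_def darc_def by blast
lemma darc_A: "darc c S x y \<Longrightarrow> A x y" unfolding uadj_def by blast
lemma darc_c: "darc c S x y \<Longrightarrow> y \<in> c x \<and> x \<in> S \<and> y \<in> S" unfolding darc_def by blast
lemma A_cases: "A x y \<Longrightarrow> darc c S x y \<or> darc c S y x" unfolding uadj_def by blast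

lemma darc_asym: "darc c S x y \<Longrightarrow> \<not> darc c S y x"
  unfolding darc_def using arc_asym SV by blast

lemma A_incomp: assumes "A x y" shows "\<not> anc x y" "\<not> anc y x"
  using assms arc_incomp SV unfolding uadj_def darc_def by blast+

lemma A_irrefl: "\<not> A x x" using A_incomp anc_refl by blast

lemma exit1: assumes "x \<in> V" "i \<in> V" "anc x i" "\<not> anc x ov" "ov \<in> c i" shows "i = x"
proof (rule ccontr)
  assume ne: "i \<noteq> x"
  have ir: "i \<noteq> r"
  proof
    assume "i = r"
    then have "anc x r" using assms(3) by simp
    then have "x = r" by (rule anc_root)
    then show False using ne \<open>i = r\<close> by simp
  qed
  have "anc x (p i)" using anc_step[OF ir] assms(3) ne by auto
  moreover have "anc (p i) (l (p i))"
    using lb_facts[OF assms(2) ir] anc_parent by metis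
  moreover have "anc (l (p i)) ov" using arc_basic assms by blast
  ultimately have "anc x ov" using anc_trans by blast
  then show False using assms(4) by blast
qed

lemma exit2: assumes "x \<in> V" "ov \<in> V" "anc x i" "\<not> anc x ov" "i \<in> c ov" shows "x \<in> c ov"
proof -
  have a: "ov \<noteq> r" "anc (l (p ov)) i" using arc_basic assms by blast+
  have lf: "l (p ov) \<in> V" "l (p ov) \<noteq> r" "p (l (p ov)) = p ov" using lb_facts assms a by blast+
  have "anc (l (p ov)) x \<or> anc x (l (p ov))" using anc_total a(2) assms(3) by blast
  then show ?thesis
  proof
    assume "anc (l (p ov)) x" then show ?thesis using arc_convex assms by blast
  next
    assume h: "anc x (l (p ov))"
    show ?thesis
    proof (cases "x = l (p ov)")
      case True then show ?thesis using arc_convex assms by simp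
    next
      case False
      then have "anc x (p ov)" using anc_step[OF lf(2)] h lf(3) by metis
      then have "anc x ov" using anc_parent[OF a(1)] anc_trans by blast
      then show ?thesis using assms(4) by blast
    qed
  qed
qed

lemma sink_source: assumes "x \<in> H" "y \<in> H" "A x y" "hole_sink c S H x" "hole_source c S H x"
  shows False
  using assms darc_asym unfolding hole_sink_def hole_source_def by blast

lemma cycD: assumes "cyc H"
  shows "finite H" "H \<subseteq> S" "\<And>x. x\<in>H \<Longrightarrow> \<exists>y z. y \<noteq> z \<and> N H x = {y,z}"
   "\<And>X. (\<exists>x\<in>H. x\<in>X) \<Longrightarrow> (\<exists>x\<in>H. x\<notin>X) \<Longrightarrow>
       (\<exists>e1 e2 f1 f2. e1\<in>H \<and> e1\<in>X \<and> e2\<in>H \<and> e2\<notin>X \<and> A e1 e2 \<and>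
          f1\<in>H \<and> f1\<in>X \<and> f2\<in>H \<and> f2\<notin>X \<and> A f1 f2 \<and> (e1\<noteq>f1 \<or> e2\<noteq>f2))"
  using assms unfolding cyc_def by blast+

lemma N_other: assumes "cyc H" "x \<in> H" "w \<in> N H x"
  obtains w' where "N H x = {w, w'}" "w' \<noteq> w"
proof -
  obtain y z where "y \<noteq> z" "N H x = {y,z}" using cycD(3)[OF assms(1,2)] by blast
  then show ?thesis using that assms(3) by (metis empty_iff insert_commute insert_iff)
qed

lemma N_mem: "w \<in> N H x \<longleftrightarrow> w \<in> H \<and> A x w" unfolding N_def by simp

lemma no_source_free: assumes "cyc H" "H \<noteq> {}"
  shows "\<exists>a. hole_source c S H a"
proof (rule ccontr)
  assume ns: "\<nexists>a. hole_source c S H a"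
  have inn: "\<exists>z\<in>H. darc c S z x" if xH: "x \<in> H" for x
  proof -
    obtain y where "y \<in> H" "A x y" "\<not> darc c S x y"
      using ns xH unfolding hole_source_def by blast
    then show ?thesis using A_cases by blast
  qed
  have fin: "finite H" using cycD assms by blast
  define d where "d = Min (dep ` H)"
  have "d \<in> dep ` H" using Min_in fin assms(2) d_def by simp
  then obtain m where m: "m \<in> H" "dep m = d" by blast
  have mind: "\<And>z. z \<in> H \<Longrightarrow> d \<le> dep z" using fin d_def by simp
  have HV: "H \<subseteq> V" using cycD(2)[OF assms(1)] SV by blast
  obtain z where z: "z \<in> H" "darc c S z m" using inn m by blast
  have zc: "m \<in> c z" using z darc_c by blast
  have "dep z \<le> dep m" using arc_dep(1)[OF _ zc] HV z by blast
  then have "dep z = dep m" using mind z m by fastforce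
  then have "m = l (p z)" using arc_dep(2)[OF _ zc] HV z by blast
  then have "dep z = d" using m \<open>dep z = dep m\<close> by simp
  obtain z2 where z2: "z2 \<in> H" "darc c S z2 z" using inn z by blast
  have z2c: "z \<in> c z2" using z2 darc_c by blast
  have "dep z2 \<le> dep z" using arc_dep(1)[OF _ z2c] HV z2 by blast
  then have "dep z2 = dep z" using mind z2 \<open>dep z = d\<close> by fastforce
  then have "z = l (p z2)" using arc_dep(2)[OF _ z2c] HV z2 by blast
  moreover have "z2 \<noteq> r" using arc_basic z2c HV z2 by blast
  ultimately have "c z = {}" using lastborn_c HV z2 by blast
  then show False using zc by blast
qed

end

context bts begin
lemma GHL1:
  assumes cy: "cyc H" and aH: "a \<in> H" and src: "hole_source c S H a"
    and Na: "N H a = {x, y}" and xy: "x \<noteq> y" and axy: "anc x y"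
  shows "\<exists>x'. N H x = {a, x'} \<and> x' \<noteq> a \<and> hole_sink c S H x \<and> hole_source c S H x'
      \<and> (\<forall>w\<in>H. w \<noteq> a \<longrightarrow> w \<noteq> x' \<longrightarrow> anc x w)"
proof -
  have HS: "H \<subseteq> S" using cycD cy by blast
  have HV: "H \<subseteq> V" using HS SV by blast
  have xH: "x \<in> H" "A a x" "y \<in> H" "A a y" using Na unfolding N_def by blast+
  have dax: "darc c S a x" "darc c S a y" using src xH unfolding hole_source_def by blast+
  have "a \<in> N H x" using xH aH A_sym unfolding N_def by blast
  then obtain x' where Nx: "N H x = {a, x'}" "x' \<noteq> a" using N_other cy xH by metis
  have x'H: "x' \<in> H" "A x x'" using Nx unfolding N_def by blast+
  have nax': "\<not> anc x x'" using A_incomp x'H by blast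
  have nax: "\<not> anc x a" using A_incomp xH A_sym by blast
  have exitL: "ov \<in> {a, x'} \<and> (i \<noteq> x \<longrightarrow> darc c S ov x)"
    if "i \<in> H" "ov \<in> H" "anc x i" "\<not> anc x ov" "A i ov" for i ov
  proof (cases "darc c S i ov")
    case True
    then have "i = x" using exit1[of x i ov] HV that xH darc_c by blast
    then show ?thesis using that Nx unfolding N_def by blast
  next
    case False
    then have "darc c S ov i" using that A_cases by blast
    then have "x \<in> c ov" using exit2[of x ov i] HV that xH darc_c by blast
    then have "darc c S ov x" using HS that xH unfolding darc_def by blast
    then have "ov \<in> N H x" using that A_sym darc_A unfolding N_def by blast
    then show ?thesis using Nx \<open>darc c S ov x\<close> by blast
  qed
  have "x \<in> N H x'" using x'H xH A_sym unfolding N_def by blast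
  then obtain x'' where Nx': "N H x' = {x, x''}" "x'' \<noteq> x" using N_other cy x'H by metis
  have x''H: "x'' \<in> H" "A x' x''" using Nx' unfolding N_def by blast+
  define X where "X = {w\<in>H. anc x w} \<union> {a}"
  have bnd: "f = x' \<and> (e = x \<or> e = x'')"
    if "e \<in> H" "e \<in> X" "f \<in> H" "f \<notin> X" "A e f" for e f
  proof (cases "e = a")
    case True
    then have "f \<in> {x, y}" using that Na unfolding N_def by blast
    then show ?thesis using that axy unfolding X_def by auto
  next
    case False
    then have ae: "anc x e" using that unfolding X_def by blast
    have naf: "\<not> anc x f" using that unfolding X_def by blast
    have "f \<in> {a, x'}" using exitL[OF that(1,3) ae naf that(5)] by blast
    then have fx': "f = x'" using that unfolding X_def by blast
    then have "e \<in> N H x'" using that A_sym unfolding N_def by blast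
    then show ?thesis using fx' Nx' by blast
  qed
  have b1: "\<exists>w\<in>H. w \<in> X" using aH unfolding X_def by blast
  have b2: "\<exists>w\<in>H. w \<notin> X" using x'H nax' Nx(2) unfolding X_def by blast
  from cycD(4)[OF cy b1 b2] obtain e1 e2 f1 f2 where ef: "e1\<in>H" "e1\<in>X" "e2\<in>H" "e2\<notin>X" "A e1 e2"
          "f1\<in>H" "f1\<in>X" "f2\<in>H" "f2\<notin>X" "A f1 f2" "e1\<noteq>f1 \<or> e2\<noteq>f2"
    by blast
  have "x'' \<in> X"
  proof -
    have "e2 = x'" "e1 = x \<or> e1 = x''" using bnd[OF ef(1-5)] by blast+
    moreover have "f2 = x'" "f1 = x \<or> f1 = x''" using bnd[OF ef(6-10)] by blast+
    ultimately have "e1 = x'' \<or> f1 = x''" using ef(11) by blast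
    then show ?thesis using ef(2,7) by blast
  qed
  moreover have "x'' \<noteq> a"
  proof
    assume "x'' = a"
    then have "x' \<in> N H a" using x''H A_sym x'H unfolding N_def by blast
    then have "x' \<in> {x, y}" using Na by blast
    then show False using nax' axy by auto
  qed
  ultimately have ax'': "anc x x''" unfolding X_def by blast
  have nax'x: "\<not> anc x x'" by fact
  have d1: "darc c S x' x" using exitL[OF x''H(1) x'H(1) ax'' nax'x] x''H A_sym Nx'(2) by blast
  have d2: "darc c S x' x''"
  proof -
    have "\<not> darc c S x'' x'"
    proof
      assume "darc c S x'' x'"
      then have "x'' = x" using exit1[of x x'' x'] HV xH x''H ax'' nax'x darc_c by blast
      then show False using Nx'(2) by blast
    qed
    then show ?thesis using A_cases x''H(2) by blast
  qed
  have sink: "hole_sink c S H x"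
    unfolding hole_sink_def
  proof (intro conjI ballI impI)
    show "x \<in> H" by fact
  next
    fix w assume "w \<in> H" "A x w"
    then have "w \<in> N H x" unfolding N_def by simp
    then have "w = a \<or> w = x'" using Nx by simp
    then show "darc c S w x" using dax d1 by blast
  qed
  have source: "hole_source c S H x'"
    unfolding hole_source_def
  proof (intro conjI ballI impI)
    show "x' \<in> H" by fact
  next
    fix w assume "w \<in> H" "A x' w"
    then have "w \<in> N H x'" unfolding N_def by simp
    then have "w = x \<or> w = x''" using Nx' by simp
    then show "darc c S x' w" using d1 d2 by blast
  qed
  define Y where "Y = {w\<in>H. anc x w} \<union> {a, x'}"
  have "H \<subseteq> Y"
  proof (rule ccontr)
    assume "\<not> H \<subseteq> Y"
    then have b2: "\<exists>w\<in>H. w \<notin> Y" by blast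
    have b1: "\<exists>w\<in>H. w \<in> Y" using aH unfolding Y_def by blast
    from cycD(4)[OF cy b1 b2] obtain e f where ef: "e\<in>H" "e\<in>Y" "f\<in>H" "f\<notin>Y" "A e f"
      by blast
    show False
    proof (cases "e = a")
      case True
      then have "f \<in> {x, y}" using ef Na unfolding N_def by blast
      then show ?thesis using ef axy unfolding Y_def by auto
    next
      case False
      show ?thesis
      proof (cases "e = x'")
        case True
        then have "f \<in> {x, x''}" using ef Nx' unfolding N_def by blast
        then show ?thesis using ef ax'' unfolding Y_def by auto
      next
        case False
        then have "anc x e" using ef \<open>e \<noteq> a\<close> unfolding Y_def by blast
        moreover have "\<not> anc x f" using ef unfolding Y_def by blast
        ultimately have "f \<in> {a, x'}" using exitL ef by blast
        then show ?thesis using ef unfolding Y_def by blast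
      qed
    qed
  qed
  then have "\<forall>w\<in>H. w \<noteq> a \<longrightarrow> w \<noteq> x' \<longrightarrow> anc x w" unfolding Y_def by blast
  then show ?thesis using Nx sink source by blast
qed

end

context bts begin
lemma source_nbrs: assumes cy: "cyc H" and aH: "a \<in> H" and src: "hole_source c S H a"
  obtains x y where "N H a = {x, y}" "x \<noteq> y" "anc x y"
proof -
  obtain x y where xy: "x \<noteq> y" "N H a = {x,y}" using cycD(3)[OF cy aH] by blast
  have "darc c S a x" "darc c S a y" using src xy unfolding hole_source_def N_def by blast+
  then have "anc x y \<or> anc y x" using arc_chain darc_c SV by blast
  then show ?thesis using that xy by (metis insert_commute)
qed

lemma GHL:
  assumes cy: "cyc H" and aH: "a \<in> H" and src: "hole_source c S H a"
    and Na: "N H a = {x, y}" and xy: "x \<noteq> y" and axy: "anc x y"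
  shows "\<exists>x'. N H x = {a, x'} \<and> x' \<noteq> a \<and> hole_sink c S H x \<and> hole_source c S H x'
      \<and> (\<forall>w\<in>H. w \<noteq> a \<longrightarrow> w \<noteq> x' \<longrightarrow> anc x w)
      \<and> (\<forall>b. hole_source c S H b \<longrightarrow> b \<in> {a, x'})"
proof -
  obtain x' where g: "N H x = {a, x'}" "x' \<noteq> a" "hole_sink c S H x" "hole_source c S H x'"
      "\<forall>w\<in>H. w \<noteq> a \<longrightarrow> w \<noteq> x' \<longrightarrow> anc x w"
    using GHL1[OF assms] by blast
  have HV: "H \<subseteq> V" using cycD(2)[OF cy] SV by blast
  have xH: "x \<in> H" "A x a" using Na A_sym unfolding N_def by blast+
  have x'H: "x' \<in> H" using g unfolding N_def by blast
  have "b \<in> {a, x'}" if sb: "hole_source c S H b" for b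
  proof (rule ccontr)
    assume nb: "b \<notin> {a, x'}"
    have bH: "b \<in> H" using sb unfolding hole_source_def by blast
    obtain xb yb where nbr: "N H b = {xb, yb}" "xb \<noteq> yb" "anc xb yb"
      using source_nbrs[OF cy bH sb] by blast
    obtain xb' where gb: "N H xb = {b, xb'}" "xb' \<noteq> b" "hole_sink c S H xb" "hole_source c S H xb'"
      "\<forall>w\<in>H. w \<noteq> b \<longrightarrow> w \<noteq> xb' \<longrightarrow> anc xb w"
      using GHL1[OF cy bH sb nbr] by blast
    have xbH: "xb \<in> H" "A xb b" using nbr A_sym unfolding N_def by blast+
    have "x \<noteq> b" using sink_source[OF xH(1) aH xH(2) g(3)] sb by blast
    moreover have "x \<noteq> xb'" using sink_source[OF xH(1) aH xH(2) g(3)] gb(4) by blast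
    ultimately have "anc xb x" using gb(5) xH by blast
    have "xb \<noteq> a" using sink_source[OF xbH(1) bH xbH(2) gb(3)] src by blast
    moreover have "xb \<noteq> x'" using sink_source[OF xbH(1) bH xbH(2) gb(3)] g(4) by blast
    ultimately have "anc x xb" using g(5) xbH by blast
    then have "x = xb" using anc_antisym \<open>anc xb x\<close> HV xH by blast
    then have "b \<in> N H x" using xbH A_sym bH unfolding N_def by blast
    then show False using g(1) nb by blast
  qed
  then show ?thesis using g by blast
qed

lemma pivot_exists: assumes cy: "cyc H" "H \<noteq> {}"
  shows "\<exists>s a b. is_pivot r p c S H s \<and> N H s = {a, b} \<and> a \<noteq> b \<and> hole_source c S H a
    \<and> hole_source c S H b \<and> (\<forall>w. hole_source c S H w \<longrightarrow> w \<in> {a,b})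
    \<and> (\<forall>w\<in>H. w \<noteq> a \<longrightarrow> w \<noteq> b \<longrightarrow> anc s w)"
proof -
  obtain a where src: "hole_source c S H a" using no_source_free assms by blast
  have aH: "a \<in> H" using src unfolding hole_source_def by blast
  obtain x y where nbr: "N H a = {x, y}" "x \<noteq> y" "anc x y"
    using source_nbrs[OF cy(1) aH src] by blast
  obtain x' where g: "N H x = {a, x'}" "x' \<noteq> a" "hole_sink c S H x" "hole_source c S H x'"
      "\<forall>w\<in>H. w \<noteq> a \<longrightarrow> w \<noteq> x' \<longrightarrow> anc x w" "\<forall>b. hole_source c S H b \<longrightarrow> b \<in> {a, x'}"
    using GHL[OF cy(1) aH src nbr] by blast
  have "is_pivot r p c S H x"
    unfolding is_pivot_def
  proof (intro conjI allI impI ballI)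
    show "hole_sink c S H x" by fact
  next
    fix w assume "hole_source c S H w"
    then have "w = a \<or> w = x'" using g(6) by blast
    moreover have "a \<in> N H x" "x' \<in> N H x" using g(1) by auto
    ultimately show "A x w" unfolding N_mem by blast
  next
    fix w assume "w \<in> H" "\<not> hole_source c S H w"
    moreover have "w \<noteq> a" "w \<noteq> x'" using calculation(2) src g(4) by blast+
    ultimately show "anc x w" using g(5) by blast
  qed
  then show ?thesis using g src by blast
qed

lemma pivot_unique: assumes cy: "cyc H" and "is_pivot r p c S H s1" "is_pivot r p c S H s2"
  shows "s1 = s2"
proof -
  have HV: "H \<subseteq> V" using cycD(2)[OF cy] SV by blast
  have nsrc: "\<not> hole_source c S H s" if "is_pivot r p c S H s" for s
  proof
    assume so: "hole_source c S H s"
    have sH: "s \<in> H" "hole_sink c S H s" using that unfolding is_pivot_def hole_sink_def by blast+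
    obtain y z where "y \<noteq> z" "N H s = {y,z}" using cycD(3)[OF cy sH(1)] by blast
    then have "y \<in> H" "A s y" unfolding N_def by blast+
    then show False using sink_source[OF sH(1) _ _ sH(2) so] by blast
  qed
  have s1H: "s1 \<in> H" "s2 \<in> H" using assms unfolding is_pivot_def hole_sink_def by blast+
  have "anc s1 s2" using assms(2) nsrc[OF assms(3)] s1H unfolding is_pivot_def by blast
  moreover have "anc s2 s1" using assms(3) nsrc[OF assms(2)] s1H unfolding is_pivot_def by blast
  ultimately show ?thesis using anc_antisym HV s1H by blast
qed

end

lemma cyc_exit: assumes "n > 0" "i0 < n" "i1 < n" "Q i0" "\<not> Q i1"
  shows "\<exists>i<n. Q i \<and> \<not> Q (Suc i mod n)"
proof (rule ccontr)
  assume "\<not> ?thesis"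
  then have step: "\<And>i. i < n \<Longrightarrow> Q i \<Longrightarrow> Q (Suc i mod n)" by blast
  have all: "Q ((i0 + k) mod n)" for k
  proof (induction k)
    case 0 then show ?case using assms by simp
  next
    case (Suc k)
    have "(i0 + k) mod n < n" using assms by simp
    then have "Q (Suc ((i0 + k) mod n) mod n)" using step Suc by blast
    then show ?case by (simp add: mod_Suc_eq)
  qed
  have "(i0 + (i1 + n - i0)) mod n = i1" using assms by simp
  then show False using all[of "i1 + n - i0"] assms by simp
qed

lemma mod_prev: assumes "i < n" "j < n" shows "(i = Suc j mod n) = (j = (i + n - 1) mod n)"
proof (cases "Suc j = n")
  case True
  then have "Suc j mod n = 0" by simp
  moreover have "(i + n - 1) mod n = n - 1 \<longleftrightarrow> i = 0"
  proof
    assume h: "(i + n - 1) mod n = n - 1"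
    show "i = 0"
    proof (rule ccontr)
      assume "i \<noteq> 0"
      then have "(i + n - 1) mod n = i - 1" using assms
        by (metis Nat.add_diff_assoc2 One_nat_def Suc_leI add.commute less_imp_diff_less mod_add_self1 mod_less neq0_conv)
      then show False using h assms \<open>i \<noteq> 0\<close> by linarith
    qed
  next
    assume "i = 0" then show "(i + n - 1) mod n = n - 1" using assms by simp
  qed
  ultimately show ?thesis using True by auto
next
  case False
  then have "Suc j mod n = Suc j" using assms by simp
  moreover have "(i + n - 1) mod n = j \<longleftrightarrow> i = Suc j"
  proof
    assume h: "(i + n - 1) mod n = j"
    show "i = Suc j"
    proof (cases "i = 0")
      case True
      then have "(i + n - 1) mod n = n - 1" using assms by simp
      then show ?thesis using h False assms by simp
    next
      case False
      then have "(i + n - 1) mod n = i - 1" using assms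
        by (metis Nat.add_diff_assoc2 One_nat_def Suc_leI add.commute less_imp_diff_less mod_add_self1 mod_less neq0_conv)
      then show ?thesis using h False by simp
    qed
  next
    assume "i = Suc j"
    then have "i + n - 1 = j + n" by simp
    then show "(i + n - 1) mod n = j" using assms by simp
  qed
  ultimately show ?thesis by auto
qed

lemma mod_ne: assumes "i < n" "n \<ge> 3" shows "Suc i mod n \<noteq> (i + n - 1) mod n"
proof (cases "i = 0")
  case True then show ?thesis using assms by simp
next
  case False
  then have e: "(i + n - 1) mod n = i - 1" using assms
    by (metis Nat.add_diff_assoc2 One_nat_def Suc_leI add.commute less_imp_diff_less mod_add_self1 mod_less neq0_conv)
  show ?thesis
  proof (cases "Suc i = n")
    case True then show ?thesis using e assms by simp
  next
    case False then show ?thesis using e assms by simp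
  qed
qed

lemma mod_ne2: assumes "j < n" "n \<ge> 3" shows "Suc (Suc j mod n) mod n \<noteq> j"
proof (cases "Suc j = n")
  case True then show ?thesis using assms by simp
next
  case False
  then have "Suc j mod n = Suc j" using assms by simp
  moreover have "Suc (Suc j) mod n \<noteq> j"
  proof (cases "Suc (Suc j) = n")
    case True then show ?thesis using assms by simp
  next
    case False then show ?thesis using assms \<open>Suc j \<noteq> n\<close> by simp
  qed
  ultimately show ?thesis by simp
qed

context bts begin

lemma hole_cyc: assumes "is_hole S A H" shows "cyc H"
proof -
  obtain cs where cs: "distinct cs" "length cs \<ge> 4" "set cs = H" "H \<subseteq> S"
     "\<forall>i<length cs. \<forall>j<length cs. A (cs ! i) (cs ! j) \<longleftrightarrow>
          (j = Suc i mod length cs \<or> i = Suc j mod length cs)"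
    using assms unfolding is_hole_def by blast
  define n where "n = length cs"
  have n4: "n \<ge> 4" using cs n_def by simp
  have adj: "\<And>i j. i < n \<Longrightarrow> j < n \<Longrightarrow> A (cs!i) (cs!j) \<longleftrightarrow> (j = Suc i mod n \<or> j = (i + n - 1) mod n)"
    using cs(5) mod_prev unfolding n_def by blast
  have Nc: "N H (cs!i) = {cs!(Suc i mod n), cs!((i + n - 1) mod n)}" if "i < n" for i
  proof
    show "N H (cs!i) \<subseteq> {cs!(Suc i mod n), cs!((i + n - 1) mod n)}"
    proof
      fix w assume "w \<in> N H (cs!i)"
      then have "w \<in> H" "A (cs!i) w" unfolding N_def by blast+
      then obtain j where j: "j < n" "w = cs!j" using cs(3) n_def by (metis in_set_conv_nth)
      then show "w \<in> {cs!(Suc i mod n), cs!((i + n - 1) mod n)}"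
        using adj[OF that j(1)] \<open>A (cs!i) w\<close> by auto
    qed
  next
    have "Suc i mod n < n" "(i + n - 1) mod n < n" using n4 by simp_all
    then have "cs!(Suc i mod n) \<in> H" "cs!((i + n - 1) mod n) \<in> H" using cs(3) n_def by auto
    moreover have "A (cs!i) (cs!(Suc i mod n))" "A (cs!i) (cs!((i + n - 1) mod n))"
      using adj[OF that] \<open>Suc i mod n < n\<close> \<open>(i + n - 1) mod n < n\<close> by blast+
    ultimately show "{cs!(Suc i mod n), cs!((i + n - 1) mod n)} \<subseteq> N H (cs!i)"
      unfolding N_def by blast
  qed
  have deg: "\<exists>y z. y \<noteq> z \<and> N H x = {y,z}" if xH: "x \<in> H" for x
  proof -
    obtain i where i: "i < n" "x = cs!i" using xH cs(3) n_def by (metis in_set_conv_nth)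
    have "Suc i mod n < n" "(i + n - 1) mod n < n" using n4 by simp_all
    moreover have "Suc i mod n \<noteq> (i + n - 1) mod n" using mod_ne i n4 by simp
    ultimately have "cs!(Suc i mod n) \<noteq> cs!((i + n - 1) mod n)"
      using cs(1) n_def nth_eq_iff_index_eq by metis
    then show ?thesis using Nc i by blast
  qed
  have bnd: "\<exists>e1 e2 f1 f2. e1\<in>H \<and> e1\<in>X \<and> e2\<in>H \<and> e2\<notin>X \<and> A e1 e2 \<and>
          f1\<in>H \<and> f1\<in>X \<and> f2\<in>H \<and> f2\<notin>X \<and> A f1 f2 \<and> (e1\<noteq>f1 \<or> e2\<noteq>f2)"
    if h1: "\<exists>x\<in>H. x\<in>X" and h2: "\<exists>x\<in>H. x\<notin>X" for X
  proof -
    obtain i0 where i0: "i0 < n" "cs!i0 \<in> X" using h1 cs(3) n_def by (metis in_set_conv_nth)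
    obtain i1 where i1: "i1 < n" "cs!i1 \<notin> X" using h2 cs(3) n_def by (metis in_set_conv_nth)
    have n0: "n > 0" using n4 by simp
    obtain i where i: "i < n" "cs!i \<in> X" "cs!(Suc i mod n) \<notin> X"
      using cyc_exit[of n i0 i1 "\<lambda>k. cs!k \<in> X"] n0 i0 i1 by blast
    obtain j where j: "j < n" "cs!j \<notin> X" "cs!(Suc j mod n) \<in> X"
      using cyc_exit[of n i1 i0 "\<lambda>k. cs!k \<notin> X"] n0 i0 i1 by blast
    have si: "Suc i mod n < n" "Suc j mod n < n" using n0 by simp_all
    have Hs: "cs!i \<in> H" "cs!(Suc i mod n) \<in> H" "cs!j \<in> H" "cs!(Suc j mod n) \<in> H"
      using i j si cs(3) n_def by auto
    have A1: "A (cs!i) (cs!(Suc i mod n))" using adj i si by blast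
    have A2: "A (cs!(Suc j mod n)) (cs!j)" using adj[OF j(1) si(2)] A_sym by blast
    have "cs!i \<noteq> cs!(Suc j mod n) \<or> cs!(Suc i mod n) \<noteq> cs!j"
    proof (rule ccontr)
      assume "\<not> ?thesis"
      then have "cs!i = cs!(Suc j mod n)" "cs!(Suc i mod n) = cs!j" by blast+
      then have "i = Suc j mod n" "Suc i mod n = j"
        using cs(1) n_def nth_eq_iff_index_eq i j si by metis+
      then have "Suc (Suc j mod n) mod n = j" by simp
      then show False using mod_ne2 j n4 by simp
    qed
    then show ?thesis using Hs A1 A2 i j by blast
  qed
  have fin: "finite H" using cs(3) by auto
  show ?thesis unfolding cyc_def
  proof (intro conjI allI impI)
    show "finite H" by fact
    show "H \<subseteq> S" by fact
    show "\<forall>x\<in>H. \<exists>y z. y \<noteq> z \<and> N H x = {y, z}" using deg by blast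
  next
    fix X assume "(\<exists>x\<in>H. x \<in> X) \<and> (\<exists>x\<in>H. x \<notin> X)"
    then show "\<exists>e1 e2 f1 f2. e1\<in>H \<and> e1\<in>X \<and> e2\<in>H \<and> e2\<notin>X \<and> A e1 e2 \<and>
          f1\<in>H \<and> f1\<in>X \<and> f2\<in>H \<and> f2\<notin>X \<and> A f1 f2 \<and> (e1\<noteq>f1 \<or> e2\<noteq>f2)"
      using bnd by blast
  qed
qed

end

lemma consec_nth: assumes "distinct P" "t < length P"
  shows "consec P (P!t) y \<longleftrightarrow> (0 < t \<and> y = P!(t-1)) \<or> (Suc t < length P \<and> y = P!(Suc t))"
proof
  assume "consec P (P!t) y"
  then obtain i where i: "Suc i < length P" "{P!i, P!Suc i} = {P!t, y}" unfolding consec_def by blast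
  have "P!t = P!i \<or> P!t = P!Suc i" using i(2) by blast
  then show "(0 < t \<and> y = P!(t-1)) \<or> (Suc t < length P \<and> y = P!(Suc t))"
  proof
    assume "P!t = P!i"
    then have "t = i" using assms i nth_eq_iff_index_eq by (metis Suc_lessD)
    then have "y = P!Suc i" using i(2) by (metis doubleton_eq_iff)
    then show ?thesis using \<open>t = i\<close> i by simp
  next
    assume "P!t = P!Suc i"
    then have "t = Suc i" using assms i nth_eq_iff_index_eq by metis
    then have "y = P!i" using i(2) by (metis doubleton_eq_iff)
    then show ?thesis using \<open>t = Suc i\<close> by simp
  qed
next
  assume "(0 < t \<and> y = P!(t-1)) \<or> (Suc t < length P \<and> y = P!(Suc t))"
  then show "consec P (P!t) y"
  proof
    assume h: "0 < t \<and> y = P!(t-1)"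
    then have "Suc (t-1) < length P" "{P!(t-1), P!Suc (t-1)} = {P!t, y}" using assms by auto
    then show ?thesis unfolding consec_def by blast
  next
    assume h: "Suc t < length P \<and> y = P!(Suc t)"
    then have "{P!t, P!Suc t} = {P!t, y}" by simp
    then show ?thesis unfolding consec_def using h by blast
  qed
qed

lemma consec_notin: assumes "x \<notin> set P" shows "\<not> consec P x y"
proof
  assume "consec P x y"
  then obtain i where i: "Suc i < length P" "{P!i, P!Suc i} = {x,y}" unfolding consec_def by blast
  then have "x = P!i \<or> x = P!Suc i" by blast
  moreover have "P!i \<in> set P" "P!Suc i \<in> set P" using i(1) by simp_all
  ultimately show False using assms by blast
qed

lemma seg: "a \<le> b \<Longrightarrow> Q a \<Longrightarrow> \<not> Q b \<Longrightarrow> \<exists>m. a \<le> m \<and> m < b \<and> Q m \<and> \<not> Q (Suc m)"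
proof (induction b)
  case 0 then show ?case by simp
next
  case (Suc b)
  show ?case
  proof (cases "Q b")
    case True then show ?thesis using Suc by (metis le_SucE lessI)
  next
    case False
    then have "a \<le> b" using Suc by (metis le_SucE)
    then show ?thesis using Suc False by (metis less_Suc_eq)
  qed
qed

locale th = bts +
  fixes Q :: "nat \<Rightarrow> 'a list" and u v :: 'a
  assumes Qp: "\<And>i. i<3 \<Longrightarrow> is_path_between (uadj c S) (Q i) u v"
    and Ql: "\<And>i. i<3 \<Longrightarrow> length (Q i) \<ge> 4"
    and Qi: "\<And>i j. i<3 \<Longrightarrow> j<3 \<Longrightarrow> i\<noteq>j \<Longrightarrow> set (Q i) \<inter> set (Q j) = {u,v}"
    and QS: "S = set (Q 0) \<union> set (Q 1) \<union> set (Q 2)"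
    and QA: "\<And>x y. x\<in>S \<Longrightarrow> y\<in>S \<Longrightarrow> uadj c S x y \<longleftrightarrow> (\<exists>i<3. consec (Q i) x y)"
begin

lemma Qbasic: assumes "i < 3"
  shows "distinct (Q i)" "Q i ! 0 = u" "Q i ! (length (Q i) - 1) = v" "set (Q i) \<subseteq> S"
    "\<And>m. Suc m < length (Q i) \<Longrightarrow> A (Q i ! m) (Q i ! Suc m)"
proof -
  have P: "Q i \<noteq> []" "distinct (Q i)" "hd (Q i) = u" "last (Q i) = v"
     "\<forall>m. Suc m < length (Q i) \<longrightarrow> A (Q i ! m) (Q i ! Suc m)"
    using Qp[OF assms] unfolding is_path_between_def by blast+
  show "distinct (Q i)" "Q i ! 0 = u" "Q i ! (length (Q i) - 1) = v"
    using P by (simp_all add: hd_conv_nth last_conv_nth)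
  have "i = 0 \<or> i = 1 \<or> i = 2" using assms by linarith
  then show "set (Q i) \<subseteq> S" using QS by (elim disjE) auto
  show "\<And>m. Suc m < length (Q i) \<Longrightarrow> A (Q i ! m) (Q i ! Suc m)" using P by blast
qed

lemma uv_ne: "u \<noteq> v"
proof
  assume "u = v"
  have "Q 0 ! 0 = Q 0 ! (length (Q 0) - 1)" using Qbasic[of 0] \<open>u = v\<close> by simp
  then have "0 = length (Q 0) - 1" using Qbasic(1)[of 0] Ql[of 0] nth_eq_iff_index_eq by fastforce
  then show False using Ql[of 0] by simp
qed

lemma idx_u: assumes "i < 3" "t < length (Q i)" "Q i ! t = u" shows "t = 0"
  using Qbasic[OF assms(1)] assms Ql[OF assms(1)] nth_eq_iff_index_eq by fastforce

lemma idx_v: assumes "i < 3" "t < length (Q i)" "Q i ! t = v" shows "t = length (Q i) - 1"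
  using Qbasic[OF assms(1)] assms Ql[OF assms(1)] nth_eq_iff_index_eq
  by (metis diff_less zero_less_numeral le_trans less_imp_le_nat not_less zero_less_one numeral_le_iff
      not_numeral_le_zero le_zero_eq)

lemma Sidx: assumes "x \<in> S" shows "\<exists>i<3. x \<in> set (Q i)"
proof -
  have "x \<in> set (Q 0) \<or> x \<in> set (Q 1) \<or> x \<in> set (Q 2)" using assms(1) QS by blast
  moreover have "(0::nat) < 3" "(1::nat) < 3" "(2::nat) < 3" by simp_all
  ultimately show ?thesis by blast
qed

lemma Th_int: assumes "x \<in> S" "x \<notin> {u,v}"
  shows "\<exists>i<3. \<exists>t. x = Q i ! t \<and> 0 < t \<and> Suc t < length (Q i) \<and> (\<forall>j<3. j \<noteq> i \<longrightarrow> x \<notin> set (Q j))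
     \<and> (\<forall>y\<in>S. A x y \<longleftrightarrow> y = Q i ! (t-1) \<or> y = Q i ! Suc t)"
proof -
  obtain i where i: "i < 3" "x \<in> set (Q i)" using Sidx assms(1) by blast
  obtain t where t: "t < length (Q i)" "x = Q i ! t" using i by (metis in_set_conv_nth)
  have t0: "t \<noteq> 0"
  proof
    assume "t = 0" then have "x = u" using t(2) Qbasic(2)[OF i(1)] by simp
    then show False using assms(2) by simp
  qed
  have t1: "t \<noteq> length (Q i) - 1"
  proof
    assume "t = length (Q i) - 1" then have "x = v" using t(2) Qbasic(3)[OF i(1)] by simp
    then show False using assms(2) by simp
  qed
  have oth: "\<forall>j<3. j \<noteq> i \<longrightarrow> x \<notin> set (Q j)" using Qi i assms(2) by blast
  have nb: "A x y \<longleftrightarrow> y = Q i ! (t-1) \<or> y = Q i ! Suc t" if "y \<in> S" for y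
  proof -
    have "A x y \<longleftrightarrow> (\<exists>k<3. consec (Q k) x y)" using QA assms(1) that by blast
    also have "\<dots> \<longleftrightarrow> consec (Q i) x y"
    proof
      assume "\<exists>k<3. consec (Q k) x y"
      then obtain k where k: "k < 3" "consec (Q k) x y" by blast
      have "k = i"
      proof (rule ccontr)
        assume "k \<noteq> i"
        then have "x \<notin> set (Q k)" using oth k(1) by blast
        then have "\<not> consec (Q k) x y" by (rule consec_notin)
        then show False using k(2) by simp
      qed
      then show "consec (Q i) x y" using k by simp
    qed (use i in blast)
    also have "\<dots> \<longleftrightarrow> y = Q i ! (t-1) \<or> y = Q i ! Suc t"
      using consec_nth[OF Qbasic(1)[OF i(1)] t(1), of y] t t0 t1 by auto
    finally show ?thesis .
  qed
  have "0 < t" "Suc t < length (Q i)" using t0 t1 t(1) by auto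
  then show ?thesis using i(1) t(2) oth nb by blast
qed

lemma uS0: "u \<in> S"
proof -
  have l: "0 < length (Q 0)" using Ql[of 0] by linarith
  have "Q 0 ! 0 \<in> set (Q 0)" using l by simp
  then show "u \<in> S" using Qbasic[of 0] by auto
qed

lemma Th_u: assumes "y \<in> S" shows "A u y \<longleftrightarrow> (\<exists>i<3. y = Q i ! 1)"
proof -
  have e: "consec (Q i) u y \<longleftrightarrow> y = Q i ! 1" if "i < 3" for i
  proof -
    have l0: "0 < length (Q i)" "Suc 0 < length (Q i)" using Ql[OF that] by linarith+
    show ?thesis using consec_nth[OF Qbasic(1)[OF that] l0(1), of y] Qbasic(2)[OF that] l0 by auto
  qed
  show ?thesis using QA[OF uS0 assms] e by blast
qed

lemma uS: "u \<in> S" and vS: "v \<in> S"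
proof -
  have l: "0 < length (Q 0)" "length (Q 0) - 1 < length (Q 0)" using Ql[of 0] by linarith+
  have "Q 0 ! 0 \<in> set (Q 0)" "Q 0 ! (length (Q 0) - 1) \<in> set (Q 0)" using l by simp_all
  then show "u \<in> S" "v \<in> S" using Qbasic[of 0] by auto
qed

lemma Th_v: assumes "y \<in> S" shows "A v y \<longleftrightarrow> (\<exists>i<3. y = Q i ! (length (Q i) - 2))"
proof -
  have e: "consec (Q i) v y \<longleftrightarrow> y = Q i ! (length (Q i) - 2)" if "i < 3" for i
  proof -
    define L where "L = length (Q i)"
    have L4: "L \<ge> 4" using Ql[OF that] L_def by simp
    have lt: "L - 1 < length (Q i)" using L4 L_def by simp
    have c: "consec (Q i) (Q i ! (L-1)) y \<longleftrightarrow> (0 < L-1 \<and> y = Q i!(L-1-1)) \<or> (Suc (L-1) < length (Q i) \<and> y = Q i!(Suc (L-1)))"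
      by (rule consec_nth[OF Qbasic(1)[OF that] lt])
    have h: "0 < L-1" "\<not> Suc (L-1) < length (Q i)" "L-1-1 = L-2" using L4 L_def by auto
    have "v = Q i ! (L-1)" using Qbasic(3)[OF that] L_def by simp
    then show ?thesis using c h L_def by simp
  qed
  show ?thesis using QA[OF vS assms] e by blast
qed

end

context th begin

lemma nth_inj: assumes "i < 3" "a < length (Q i)" "b < length (Q i)" "Q i ! a = Q i ! b" shows "a = b"
  using Qbasic(1)[OF assms(1)] assms(2-4) nth_eq_iff_index_eq by blast

lemma inter_uv: assumes "i < 3" "j < 3" "i \<noteq> j" "x \<in> set (Q i)" "x \<in> set (Q j)" shows "x = u \<or> x = v"
  using Qi[OF assms(1-3)] assms(4,5) by blast

lemma Lfacts: assumes "i < 3"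
  shows "0 < length (Q i)" "Suc 0 < length (Q i)" "length (Q i) - 1 < length (Q i)"
    "length (Q i) - 2 < length (Q i)" "Suc (length (Q i) - 2) = length (Q i) - 1"
  using Ql[OF assms] by linarith+

lemma idx_of_u: assumes "i < 3" "m < length (Q i)" "Q i ! m = u" shows "m = 0"
  using nth_inj[OF assms(1,2) Lfacts(1)[OF assms(1)]] assms Qbasic(2)[OF assms(1)] by simp

lemma idx_of_v: assumes "i < 3" "m < length (Q i)" "Q i ! m = v" shows "m = length (Q i) - 1"
  using nth_inj[OF assms(1,2) Lfacts(3)[OF assms(1)]] assms Qbasic(3)[OF assms(1)] by simp

lemma Q1_nuv: assumes "i < 3" shows "Q i ! 1 \<noteq> u" "Q i ! 1 \<noteq> v" "Q i ! 1 \<in> set (Q i)"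
proof -
  have l: "Suc 0 < length (Q i)" using Lfacts[OF assms] by simp
  show "Q i ! 1 \<noteq> u" using idx_of_u[OF assms l] by auto
  show "Q i ! 1 \<noteq> v" using idx_of_v[OF assms l] Ql[OF assms] by auto
  show "Q i ! 1 \<in> set (Q i)" using l by simp
qed

lemma Q2_nuv: assumes "i < 3"
  shows "Q i ! (length (Q i) - 2) \<noteq> u" "Q i ! (length (Q i) - 2) \<noteq> v" "Q i ! (length (Q i) - 2) \<in> set (Q i)"
proof -
  have l: "length (Q i) - 2 < length (Q i)" using Lfacts[OF assms] by simp
  show "Q i ! (length (Q i) - 2) \<noteq> u" using idx_of_u[OF assms l] Ql[OF assms] by auto
  show "Q i ! (length (Q i) - 2) \<noteq> v" using idx_of_v[OF assms l] Ql[OF assms] by auto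
  show "Q i ! (length (Q i) - 2) \<in> set (Q i)" using l by simp
qed

lemma Th3: assumes "x \<in> S" "A x u" "A x v" shows False
proof (cases "x \<in> {u,v}")
  case True then show False using assms A_irrefl by auto
next
  case False
  obtain i t where it: "i < 3" "x = Q i ! t" "0 < t" "Suc t < length (Q i)"
    "\<forall>y\<in>S. A x y \<longleftrightarrow> y = Q i ! (t-1) \<or> y = Q i ! Suc t"
    using Th_int[OF assms(1) False] by blast
  have l: "t - 1 < length (Q i)" using it by simp
  have "u = Q i ! (t-1) \<or> u = Q i ! Suc t" using it(5) uS0 assms(2) by blast
  then have "t - 1 = 0"
    using idx_of_u[OF it(1) l] idx_of_u[OF it(1) it(4)] by auto
  have "v = Q i ! (t-1) \<or> v = Q i ! Suc t" using it(5) vS assms(3) by blast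
  then have "t - 1 = length (Q i) - 1 \<or> Suc t = length (Q i) - 1"
    using idx_of_v[OF it(1) l] idx_of_v[OF it(1) it(4)] by auto
  then show False using \<open>t - 1 = 0\<close> it(3) Ql[OF it(1)] by linarith
qed

lemma Hs_sub: assumes "i < 3" "j < 3" shows "set (Q i) \<union> set (Q j) \<subseteq> S"
  using Qbasic(4)[OF assms(1)] Qbasic(4)[OF assms(2)] by blast

lemma N_Hs: assumes "i < 3" "j < 3" "i \<noteq> j" "x \<in> set (Q i) \<union> set (Q j)"
  shows "\<exists>y z. y \<noteq> z \<and> N (set (Q i) \<union> set (Q j)) x = {y,z}"
proof -
  define Hs where "Hs = set (Q i) \<union> set (Q j)"
  have HsS: "Hs \<subseteq> S" using Hs_sub assms Hs_def by blast
  have xS: "x \<in> S" using HsS assms(4) Hs_def by blast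
  consider "x = u" | "x = v" | "x \<notin> {u,v}" by blast
  then have "\<exists>y z. y \<noteq> z \<and> N Hs x = {y,z}"
  proof cases
    case 1
    have "N Hs x = {Q i ! 1, Q j ! 1}"
    proof
      show "N Hs x \<subseteq> {Q i ! 1, Q j ! 1}"
      proof
        fix y assume "y \<in> N Hs x"
        then have y: "y \<in> Hs" "A u y" using 1 unfolding N_def by blast+
        then obtain k where k: "k < 3" "y = Q k ! 1" using Th_u HsS by blast
        show "y \<in> {Q i ! 1, Q j ! 1}"
        proof (rule ccontr)
          assume nin: "y \<notin> {Q i ! 1, Q j ! 1}"
          then have "k \<noteq> i" "k \<noteq> j" using k by auto
          moreover have "y \<in> set (Q i) \<or> y \<in> set (Q j)" using y Hs_def by blast
          ultimately have "y = u \<or> y = v" using inter_uv k assms Q1_nuv(3)[OF k(1)] by metis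
          then show False using Q1_nuv[OF k(1)] k by blast
        qed
      qed
    next
      have "Q i ! 1 \<in> Hs" "Q j ! 1 \<in> Hs" using Q1_nuv(3) assms Hs_def by blast+
      moreover have "A u (Q i ! 1)" "A u (Q j ! 1)" using Th_u HsS calculation assms by blast+
      ultimately show "{Q i ! 1, Q j ! 1} \<subseteq> N Hs x" using 1 unfolding N_def by blast
    qed
    moreover have "Q i ! 1 \<noteq> Q j ! 1"
    proof
      assume "Q i ! 1 = Q j ! 1"
      then have "Q i ! 1 = u \<or> Q i ! 1 = v" using inter_uv[OF assms(1-3)] Q1_nuv(3) assms(1,2) by metis
      then show False using Q1_nuv[OF assms(1)] by blast
    qed
    ultimately show ?thesis by blast
  next
    case 2
    have "N Hs x = {Q i ! (length (Q i) - 2), Q j ! (length (Q j) - 2)}"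
    proof
      show "N Hs x \<subseteq> {Q i ! (length (Q i) - 2), Q j ! (length (Q j) - 2)}"
      proof
        fix y assume "y \<in> N Hs x"
        then have y: "y \<in> Hs" "A v y" using 2 unfolding N_def by blast+
        then obtain k where k: "k < 3" "y = Q k ! (length (Q k) - 2)" using Th_v HsS by blast
        show "y \<in> {Q i ! (length (Q i) - 2), Q j ! (length (Q j) - 2)}"
        proof (rule ccontr)
          assume nin: "y \<notin> {Q i ! (length (Q i) - 2), Q j ! (length (Q j) - 2)}"
          then have "k \<noteq> i" "k \<noteq> j" using k by auto
          moreover have "y \<in> set (Q i) \<or> y \<in> set (Q j)" using y Hs_def by blast
          ultimately have "y = u \<or> y = v" using inter_uv k assms Q2_nuv(3)[OF k(1)] by metis
          then show False using Q2_nuv[OF k(1)] k by blast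
        qed
      qed
    next
      have "Q i ! (length (Q i) - 2) \<in> Hs" "Q j ! (length (Q j) - 2) \<in> Hs" using Q2_nuv(3) assms Hs_def by blast+
      moreover have "A v (Q i ! (length (Q i) - 2))" "A v (Q j ! (length (Q j) - 2))"
        using Th_v HsS calculation assms by blast+
      ultimately show "{Q i ! (length (Q i) - 2), Q j ! (length (Q j) - 2)} \<subseteq> N Hs x"
        using 2 unfolding N_def by blast
    qed
    moreover have "Q i ! (length (Q i) - 2) \<noteq> Q j ! (length (Q j) - 2)"
    proof
      assume "Q i ! (length (Q i) - 2) = Q j ! (length (Q j) - 2)"
      then have "Q i ! (length (Q i) - 2) = u \<or> Q i ! (length (Q i) - 2) = v"
        using inter_uv[OF assms(1-3)] Q2_nuv(3) assms(1,2) by metis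
      then show False using Q2_nuv[OF assms(1)] by blast
    qed
    ultimately show ?thesis by blast
  next
    case 3
    obtain k t where it: "k < 3" "x = Q k ! t" "0 < t" "Suc t < length (Q k)"
      "\<forall>j'<3. j' \<noteq> k \<longrightarrow> x \<notin> set (Q j')"
      "\<forall>y\<in>S. A x y \<longleftrightarrow> y = Q k ! (t-1) \<or> y = Q k ! Suc t"
      using Th_int[OF xS 3] by blast
    have kij: "k = i \<or> k = j" using it(5) assms(1,2,4) by blast
    have sub: "set (Q k) \<subseteq> Hs" using kij Hs_def by blast
    have l: "t - 1 < length (Q k)" using it by simp
    have mem: "Q k ! (t-1) \<in> Hs" "Q k ! Suc t \<in> Hs" using l it(4) sub by auto
    have "N Hs x = {Q k ! (t-1), Q k ! Suc t}"
      using it(6) mem HsS unfolding N_def by blast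
    moreover have "Q k ! (t-1) \<noteq> Q k ! Suc t"
    proof
      assume "Q k ! (t-1) = Q k ! Suc t"
      then have "t - 1 = Suc t" using nth_inj[OF it(1) l it(4)] by blast
      then show False by simp
    qed
    ultimately show ?thesis by blast
  qed
  then show ?thesis using Hs_def by simp
qed

lemma seg_Q: assumes "a \<le> b" "P a" "\<not> P b"
  obtains m where "a \<le> m" "m < b" "P m" "\<not> P (Suc m)"
  using seg[of a b P] assms by blast

lemma bnd_Hs: assumes ij: "i < 3" "j < 3" "i \<noteq> j"
  and w: "win \<in> set (Q i) \<union> set (Q j)" "win \<in> X" "wout \<in> set (Q i) \<union> set (Q j)" "wout \<notin> X"
  shows "\<exists>e1 e2 f1 f2. e1\<in>set (Q i) \<union> set (Q j) \<and> e1\<in>X \<and> e2\<in>set (Q i) \<union> set (Q j) \<and> e2\<notin>X \<and> A e1 e2 \<and>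
          f1\<in>set (Q i) \<union> set (Q j) \<and> f1\<in>X \<and> f2\<in>set (Q i) \<union> set (Q j) \<and> f2\<notin>X \<and> A f1 f2 \<and> (e1\<noteq>f1 \<or> e2\<noteq>f2)"
proof -
  define Hs where "Hs = set (Q i) \<union> set (Q j)"
  have edge: "Q k ! m \<in> Hs \<and> Q k ! Suc m \<in> Hs \<and> A (Q k ! m) (Q k ! Suc m)"
    if "k = i \<or> k = j" "Suc m < length (Q k)" for k m
  proof -
    have k3: "k < 3" using that ij by blast
    have "Q k ! m \<in> set (Q k)" "Q k ! Suc m \<in> set (Q k)" using that(2) by simp_all
    then show ?thesis using that Qbasic(5)[OF k3 that(2)] Hs_def by blast
  qed
  have u0: "Q k ! 0 = u" "Q k ! (length (Q k) - 1) = v" "0 < length (Q k)" "length (Q k) - 1 < length (Q k)"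
    "length (Q k) \<ge> 4" if "k = i \<or> k = j" for k
  proof -
    have k3: "k < 3" using that ij by blast
    show "Q k ! 0 = u" "Q k ! (length (Q k) - 1) = v" using Qbasic[OF k3] by simp_all
    show "0 < length (Q k)" "length (Q k) - 1 < length (Q k)" using Lfacts[OF k3] by simp_all
    show "length (Q k) \<ge> 4" using Ql[OF k3] .
  qed
  have inj: "a = b" if "k = i \<or> k = j" "a < length (Q k)" "b < length (Q k)" "Q k ! a = Q k ! b" for k a b
    using nth_inj that ij by blast
  have idx: "\<exists>k t. (k = i \<or> k = j) \<and> t < length (Q k) \<and> Q k ! t = w" if "w \<in> Hs" for w
    using that unfolding Hs_def by (metis Un_iff in_set_conv_nth)
  consider "u \<in> X" "v \<in> X" | "u \<in> X" "v \<notin> X" | "u \<notin> X" "v \<in> X" | "u \<notin> X" "v \<notin> X" by blast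
  then have "\<exists>e1 e2 f1 f2. e1\<in>Hs \<and> e1\<in>X \<and> e2\<in>Hs \<and> e2\<notin>X \<and> A e1 e2 \<and>
          f1\<in>Hs \<and> f1\<in>X \<and> f2\<in>Hs \<and> f2\<notin>X \<and> A f1 f2 \<and> (e1\<noteq>f1 \<or> e2\<noteq>f2)"
  proof cases
    case 1
    obtain k t where kt: "k = i \<or> k = j" "t < length (Q k)" "Q k ! t = wout" using idx w Hs_def by blast
    define L where "L = length (Q k)"
    have uk: "Q k ! 0 = u" "Q k ! (L - 1) = v" "L - 1 < L" using u0[OF kt(1)] L_def by simp_all
    obtain m1 where m1: "0 \<le> m1" "m1 < t" "Q k ! m1 \<in> X" "Q k ! Suc m1 \<notin> X"
      using seg_Q[of 0 t "\<lambda>m. Q k ! m \<in> X"] kt uk 1 w by auto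
    have tL: "t \<le> L - 1" using kt(2) L_def by simp
    obtain m2 where m2: "t \<le> m2" "m2 < L - 1" "Q k ! m2 \<notin> X" "Q k ! Suc m2 \<in> X"
      using seg_Q[of t "L - 1" "\<lambda>m. Q k ! m \<notin> X"] tL kt uk 1 w by auto
    have e1: "Q k ! m1 \<in> Hs \<and> Q k ! Suc m1 \<in> Hs \<and> A (Q k ! m1) (Q k ! Suc m1)"
      using edge kt(1) m1(2) kt(2) by simp
    have e2: "Q k ! m2 \<in> Hs \<and> Q k ! Suc m2 \<in> Hs \<and> A (Q k ! m2) (Q k ! Suc m2)"
      using edge kt(1) m2(2) L_def by simp
    have ne: "Q k ! m1 \<noteq> Q k ! Suc m2"
    proof
      assume "Q k ! m1 = Q k ! Suc m2"
      then have "m1 = Suc m2" using inj[OF kt(1)] m1 m2 kt(2) L_def by simp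
      then show False using m1 m2 by simp
    qed
    show ?thesis using e1 e2 m1 m2 ne A_sym by blast
  next
    case 2
    obtain m1 where m1: "0 \<le> m1" "m1 < length (Q i) - 1" "Q i ! m1 \<in> X" "Q i ! Suc m1 \<notin> X"
      using seg_Q[of 0 "length (Q i) - 1" "\<lambda>m. Q i ! m \<in> X"] u0[of i] 2 by auto
    obtain m2 where m2: "0 \<le> m2" "m2 < length (Q j) - 1" "Q j ! m2 \<in> X" "Q j ! Suc m2 \<notin> X"
      using seg_Q[of 0 "length (Q j) - 1" "\<lambda>m. Q j ! m \<in> X"] u0[of j] 2 by auto
    have e1: "Q i ! m1 \<in> Hs \<and> Q i ! Suc m1 \<in> Hs \<and> A (Q i ! m1) (Q i ! Suc m1)"
      using edge[of i m1] m1(2) by simp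
    have e2: "Q j ! m2 \<in> Hs \<and> Q j ! Suc m2 \<in> Hs \<and> A (Q j ! m2) (Q j ! Suc m2)"
      using edge[of j m2] m2(2) by simp
    have ne: "Q i ! m1 \<noteq> Q j ! m2 \<or> Q i ! Suc m1 \<noteq> Q j ! Suc m2"
    proof (rule ccontr)
      assume "\<not> ?thesis"
      then have eq: "Q i ! m1 = Q j ! m2" "Q i ! Suc m1 = Q j ! Suc m2" by blast+
      have "Q i ! m1 \<in> set (Q i)" "Q j ! m2 \<in> set (Q j)" "Q i ! Suc m1 \<in> set (Q i)" "Q j ! Suc m2 \<in> set (Q j)"
        using m1(2) m2(2) by simp_all
      then have "Q i ! m1 = u \<or> Q i ! m1 = v" "Q i ! Suc m1 = u \<or> Q i ! Suc m1 = v"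
        using inter_uv[OF ij] eq by metis+
      then have "Q i ! m1 = u" "Q i ! Suc m1 = v" using m1 2 by auto
      then have "m1 = 0" "Suc m1 = length (Q i) - 1"
        using idx_of_u[OF ij(1)] idx_of_v[OF ij(1)] m1(2) by simp_all
      then show False using Ql[OF ij(1)] by simp
    qed
    show ?thesis using e1 e2 m1 m2 ne by blast
  next
    case 3
    obtain m1 where m1: "0 \<le> m1" "m1 < length (Q i) - 1" "Q i ! m1 \<notin> X" "Q i ! Suc m1 \<in> X"
      using seg_Q[of 0 "length (Q i) - 1" "\<lambda>m. Q i ! m \<notin> X"] u0[of i] 3 by auto
    obtain m2 where m2: "0 \<le> m2" "m2 < length (Q j) - 1" "Q j ! m2 \<notin> X" "Q j ! Suc m2 \<in> X"
      using seg_Q[of 0 "length (Q j) - 1" "\<lambda>m. Q j ! m \<notin> X"] u0[of j] 3 by auto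
    have e1: "Q i ! m1 \<in> Hs \<and> Q i ! Suc m1 \<in> Hs \<and> A (Q i ! m1) (Q i ! Suc m1)"
      using edge[of i m1] m1(2) by simp
    have e2: "Q j ! m2 \<in> Hs \<and> Q j ! Suc m2 \<in> Hs \<and> A (Q j ! m2) (Q j ! Suc m2)"
      using edge[of j m2] m2(2) by simp
    have ne: "Q i ! Suc m1 \<noteq> Q j ! Suc m2 \<or> Q i ! m1 \<noteq> Q j ! m2"
    proof (rule ccontr)
      assume "\<not> ?thesis"
      then have eq: "Q i ! m1 = Q j ! m2" "Q i ! Suc m1 = Q j ! Suc m2" by blast+
      have "Q i ! m1 \<in> set (Q i)" "Q j ! m2 \<in> set (Q j)" "Q i ! Suc m1 \<in> set (Q i)" "Q j ! Suc m2 \<in> set (Q j)"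
        using m1(2) m2(2) by simp_all
      then have "Q i ! m1 = u \<or> Q i ! m1 = v" "Q i ! Suc m1 = u \<or> Q i ! Suc m1 = v"
        using inter_uv[OF ij] eq by metis+
      then have "Q i ! m1 = u" "Q i ! Suc m1 = v" using m1 3 by auto
      then have "m1 = 0" "Suc m1 = length (Q i) - 1"
        using idx_of_u[OF ij(1)] idx_of_v[OF ij(1)] m1(2) by simp_all
      then show False using Ql[OF ij(1)] by simp
    qed
    show ?thesis using e1 e2 m1 m2 ne A_sym by blast
  next
    case 4
    obtain k t where kt: "k = i \<or> k = j" "t < length (Q k)" "Q k ! t = win" using idx w Hs_def by blast
    define L where "L = length (Q k)"
    have uk: "Q k ! 0 = u" "Q k ! (L - 1) = v" "L - 1 < L" using u0[OF kt(1)] L_def by simp_all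
    obtain m1 where m1: "0 \<le> m1" "m1 < t" "Q k ! m1 \<notin> X" "Q k ! Suc m1 \<in> X"
      using seg_Q[of 0 t "\<lambda>m. Q k ! m \<notin> X"] kt uk 4 w by auto
    have tL: "t \<le> L - 1" using kt(2) L_def by simp
    obtain m2 where m2: "t \<le> m2" "m2 < L - 1" "Q k ! m2 \<in> X" "Q k ! Suc m2 \<notin> X"
      using seg_Q[of t "L - 1" "\<lambda>m. Q k ! m \<in> X"] tL kt uk 4 w by auto
    have e1: "Q k ! m1 \<in> Hs \<and> Q k ! Suc m1 \<in> Hs \<and> A (Q k ! m1) (Q k ! Suc m1)"
      using edge kt(1) m1(2) kt(2) by simp
    have e2: "Q k ! m2 \<in> Hs \<and> Q k ! Suc m2 \<in> Hs \<and> A (Q k ! m2) (Q k ! Suc m2)"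
      using edge kt(1) m2(2) L_def by simp
    have ne: "Q k ! m1 \<noteq> Q k ! Suc m2"
    proof
      assume "Q k ! m1 = Q k ! Suc m2"
      then have "m1 = Suc m2" using inj[OF kt(1)] m1 m2 kt(2) L_def by simp
      then show False using m1 m2 by simp
    qed
    show ?thesis using e1 e2 m1 m2 ne A_sym by blast
  qed
  then show ?thesis unfolding Hs_def .
qed

lemma Th_cyc: assumes "i < 3" "j < 3" "i \<noteq> j" shows "cyc (set (Q i) \<union> set (Q j))"
  unfolding cyc_def
proof (intro conjI allI impI ballI)
  show "finite (set (Q i) \<union> set (Q j))" by simp
  show "set (Q i) \<union> set (Q j) \<subseteq> S" using Hs_sub assms by blast
next
  fix x assume "x \<in> set (Q i) \<union> set (Q j)"
  then show "\<exists>y z. y \<noteq> z \<and> N (set (Q i) \<union> set (Q j)) x = {y, z}" using N_Hs assms by blast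
next
  fix X assume h: "(\<exists>x\<in>set (Q i) \<union> set (Q j). x \<in> X) \<and> (\<exists>x\<in>set (Q i) \<union> set (Q j). x \<notin> X)"
  then obtain win wout where "win \<in> set (Q i) \<union> set (Q j)" "win \<in> X"
      "wout \<in> set (Q i) \<union> set (Q j)" "wout \<notin> X" by blast
  then show "\<exists>e1 e2 f1 f2. e1\<in>set (Q i) \<union> set (Q j) \<and> e1\<in>X \<and> e2\<in>set (Q i) \<union> set (Q j) \<and> e2\<notin>X \<and> A e1 e2 \<and>
          f1\<in>set (Q i) \<union> set (Q j) \<and> f1\<in>X \<and> f2\<in>set (Q i) \<union> set (Q j) \<and> f2\<notin>X \<and> A f1 f2 \<and> (e1\<noteq>f1 \<or> e2\<noteq>f2)"
    using bnd_Hs[OF assms] by blast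
qed

end

context th begin

lemma other_idx: assumes "(i::nat) < 3"
  obtains j k where "j < 3" "k < 3" "j \<noteq> i" "k \<noteq> i" "j \<noteq> k" "\<And>m. m < 3 \<Longrightarrow> m = i \<or> m = j \<or> m = k"
proof -
  have "i = 0 \<or> i = 1 \<or> i = 2" using assms by linarith
  then show ?thesis
  proof (elim disjE)
    assume "i = 0" then show ?thesis using that[of 1 2] by linarith
  next
    assume "i = 1" then show ?thesis using that[of 0 2] by linarith
  next
    assume "i = 2" then show ?thesis using that[of 0 1] by linarith
  qed
qed

lemma core:
  assumes cy: "cyc H" and sH: "s \<in> H" and su: "s \<notin> {u,v}" and Nh: "N H s = {a,b}" and ab: "a \<noteq> b"
    and srcs: "\<forall>w. hole_source c S H w \<longrightarrow> w \<in> {a,b}" and sa: "hole_source c S H a"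
    and ancall: "\<forall>w\<in>H. w \<noteq> a \<longrightarrow> w \<noteq> b \<longrightarrow> anc s w" and auv: "a \<notin> {u,v}"
  shows False
proof -
  have HS: "H \<subseteq> S" using cycD(2)[OF cy] .
  have sS: "s \<in> S" using HS sH by blast
  obtain i t where it: "i < 3" "s = Q i ! t" "0 < t" "Suc t < length (Q i)"
    "\<forall>y\<in>S. A s y \<longleftrightarrow> y = Q i ! (t-1) \<or> y = Q i ! Suc t"
    using Th_int[OF sS su] by blast
  have aH: "a \<in> H" "A s a" "b \<in> H" "A s b" using Nh unfolding N_def by blast+
  have aS: "a \<in> S" "b \<in> S" using aH HS by blast+
  have lt: "t - 1 < length (Q i)" using it by simp
  have mem: "Q i ! (t-1) \<in> set (Q i)" "Q i ! Suc t \<in> set (Q i)" "s \<in> set (Q i)" using lt it by simp_all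
  have "a = Q i ! (t-1) \<or> a = Q i ! Suc t" using it(5) aH(2) aS(1) by blast
  then have ab_in1: "a \<in> set (Q i)" using mem by auto
  have "b = Q i ! (t-1) \<or> b = Q i ! Suc t" using it(5) aH(4) aS(2) by blast
  then have "b \<in> set (Q i)" using mem by auto
  note ab_in = ab_in1 this
  have nbS2: "\<forall>y\<in>S. A s y \<longleftrightarrow> y = a \<or> y = b"
  proof -
    have "a = Q i ! (t-1) \<or> a = Q i ! Suc t" "b = Q i ! (t-1) \<or> b = Q i ! Suc t"
      using it(5) aH aS by blast+
    then have "\<And>y. (y = Q i ! (t-1) \<or> y = Q i ! Suc t) \<longleftrightarrow> (y = a \<or> y = b)" using ab by blast
    then show ?thesis using it(5) by blast
  qed
  obtain i' t' where it': "i' < 3" "a = Q i' ! t'" "0 < t'" "Suc t' < length (Q i')"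
    "\<forall>j<3. j \<noteq> i' \<longrightarrow> a \<notin> set (Q j)"
    "\<forall>y\<in>S. A a y \<longleftrightarrow> y = Q i' ! (t'-1) \<or> y = Q i' ! Suc t'"
    using Th_int[OF aS(1) auv] by blast
  have "i' = i" using it'(5) it(1) ab_in(1) by blast
  define n1 where "n1 = Q i ! (t'-1)"
  define n2 where "n2 = Q i ! Suc t'"
  have lt': "t' - 1 < length (Q i)" "Suc t' < length (Q i)" using it' \<open>i' = i\<close> by simp_all
  have n12: "n1 \<in> set (Q i)" "n2 \<in> set (Q i)" using lt' n1_def n2_def by simp_all
  have nbA: "\<forall>y\<in>S. A a y \<longleftrightarrow> y = n1 \<or> y = n2" using it'(6) \<open>i' = i\<close> n1_def n2_def by simp
  have "A a s" using aH A_sym by blast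
  then have sn: "s = n1 \<or> s = n2" using nbA sS by blast
  have n1n2: "n1 \<noteq> n2"
  proof
    assume "n1 = n2"
    then have "t' - 1 = Suc t'" using nth_inj[OF it(1) lt'] n1_def n2_def by blast
    then show False by simp
  qed
  define a2 where "a2 = (if s = n1 then n2 else n1)"
  have a2: "a2 \<in> set (Q i)" "a2 \<noteq> s" "\<forall>y\<in>S. A a y \<longleftrightarrow> y = s \<or> y = a2"
    using n12 n1n2 sn nbA unfolding a2_def by auto
  have a2S: "a2 \<in> S" using a2(1) Qbasic(4)[OF it(1)] by blast
  have a2H: "a2 \<in> H"
  proof -
    obtain y1 y2 where y: "y1 \<noteq> y2" "N H a = {y1, y2}" using cycD(3)[OF cy aH(1)] by blast
    then have "y1 \<in> H" "y2 \<in> H" "A a y1" "A a y2" unfolding N_def by blast+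
    then have "y1 = s \<or> y1 = a2" "y2 = s \<or> y2 = a2" using a2(3) HS by blast+
    then have "a2 = y1 \<or> a2 = y2" using y(1) by blast
    then show ?thesis using \<open>y1 \<in> H\<close> \<open>y2 \<in> H\<close> by blast
  qed
  have Aaa2: "A a a2" using a2(3) a2S by blast
  have das: "darc c S a s" using sa sH \<open>A a s\<close> unfolding hole_source_def by blast
  have daa2: "darc c S a a2" using sa a2H Aaa2 unfolding hole_source_def by blast
  have a2b: "a2 \<noteq> b"
  proof
    assume "a2 = b"
    then have "darc c S a b" using daa2 by simp
    then have "s \<in> c a" "b \<in> c a" "a \<in> V" using das darc_c SV by blast+
    then have "anc s b \<or> anc b s" using arc_chain by blast
    then show False using A_incomp aH(4) by blast
  qed
  have a2a: "a2 \<noteq> a" using Aaa2 A_irrefl by blast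
  have sa2: "anc s a2" using ancall a2H a2b a2a by blast
  have srcij: "\<forall>w. hole_source c S (set (Q i) \<union> set (Q j)) w \<longrightarrow> w \<in> {a,b}" if j: "j < 3" "j \<noteq> i" for j
  proof -
    define Hij where "Hij = set (Q i) \<union> set (Q j)"
    have cyij: "cyc Hij" using Th_cyc it(1) j Hij_def by metis
    have HijS: "Hij \<subseteq> S" using cycD(2)[OF cyij] .
    have aHij: "a \<in> Hij" using ab_in Hij_def by blast
    have NHa: "N Hij a = {s, a2}"
    proof
      show "N Hij a \<subseteq> {s, a2}" using a2(3) HijS unfolding N_def by blast
      have "s \<in> Hij" "a2 \<in> Hij" using mem(3) a2(1) Hij_def by blast+
      then show "{s, a2} \<subseteq> N Hij a" using \<open>A a s\<close> Aaa2 unfolding N_def by blast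
    qed
    have srcA: "hole_source c S Hij a"
      unfolding hole_source_def
    proof (intro conjI ballI impI)
      show "a \<in> Hij" by fact
    next
      fix y assume "y \<in> Hij" "A a y"
      then have "y = s \<or> y = a2" using a2(3) HijS by blast
      then show "darc c S a y" using das daa2 by blast
    qed
    obtain x'' where g: "N Hij s = {a, x''}" "x'' \<noteq> a" "\<forall>b'. hole_source c S Hij b' \<longrightarrow> b' \<in> {a, x''}"
      using GHL[OF cyij aHij srcA NHa a2(2)[symmetric] sa2] by blast
    have "x'' \<in> N Hij s" using g(1) by blast
    then have "x'' \<in> S" "A s x''" using HijS unfolding N_def by blast+
    then have "x'' = b" using nbS2 g(2) by blast
    then show ?thesis using g(3) Hij_def by blast
  qed
  obtain j k where jk: "j < 3" "k < 3" "j \<noteq> i" "k \<noteq> i" "j \<noteq> k" "\<And>m. m < 3 \<Longrightarrow> m = i \<or> m = j \<or> m = k"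
    using other_idx[OF it(1)] by blast
  define Hjk where "Hjk = set (Q j) \<union> set (Q k)"
  have cyjk: "cyc Hjk" using Th_cyc jk Hjk_def by metis
  have HjkS: "Hjk \<subseteq> S" using cycD(2)[OF cyjk] .
  have "u \<in> set (Q j)" using Qbasic(2)[OF jk(1)] Lfacts(1)[OF jk(1)] by (metis nth_mem)
  then have Hne: "Hjk \<noteq> {}" using Hjk_def by blast
  have allsrc: "w = u \<or> w = v" if ws: "hole_source c S Hjk w" for w
  proof (rule ccontr)
    assume wuv: "\<not> (w = u \<or> w = v)"
    have wH: "w \<in> Hjk" using ws unfolding hole_source_def by blast
    then have wS: "w \<in> S" using HjkS by blast
    obtain m t3 where mt: "m < 3" "w = Q m ! t3" "0 < t3" "Suc t3 < length (Q m)"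
      "\<forall>j'<3. j' \<noteq> m \<longrightarrow> w \<notin> set (Q j')"
      "\<forall>y\<in>S. A w y \<longleftrightarrow> y = Q m ! (t3-1) \<or> y = Q m ! Suc t3"
      using Th_int[OF wS] wuv by blast
    have lt3: "t3 - 1 < length (Q m)" using mt by simp
    have wm: "w \<in> set (Q m)" using mt by simp
    have mjk: "m = j \<or> m = k"
    proof -
      have "m = i \<or> m = j \<or> m = k" using jk(6) mt(1) by blast
      moreover have "m \<noteq> i"
      proof
        assume "m = i"
        then have "w \<notin> set (Q j)" "w \<notin> set (Q k)" using mt(5) jk by blast+
        then show False using wH Hjk_def by blast
      qed
      ultimately show ?thesis by blast
    qed
    then have mi: "m \<noteq> i" using jk by blast
    have subm: "set (Q m) \<subseteq> Hjk" using mjk Hjk_def by blast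
    have srcm: "hole_source c S (set (Q i) \<union> set (Q m)) w"
      unfolding hole_source_def
    proof (intro conjI ballI impI)
      show "w \<in> set (Q i) \<union> set (Q m)" using wm by blast
    next
      fix y assume y: "y \<in> set (Q i) \<union> set (Q m)" "A w y"
      then have "y \<in> S" using Qbasic(4)[OF it(1)] Qbasic(4)[OF mt(1)] by blast
      then have "y = Q m ! (t3-1) \<or> y = Q m ! Suc t3" using mt(6) y(2) by blast
      then have "y \<in> set (Q m)" using lt3 mt(4) by auto
      then have "y \<in> Hjk" using subm by blast
      then show "darc c S w y" using ws y(2) unfolding hole_source_def by blast
    qed
    have "w \<in> {a, b}" using srcij[OF mt(1) mi] srcm by blast
    then have "w \<in> set (Q i)" using ab_in by blast
    then have "w = u \<or> w = v" using inter_uv[OF it(1) mt(1) mi[symmetric]] wm by blast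
    then show False using wuv by blast
  qed
  obtain w0 where w0: "hole_source c S Hjk w0" using no_source_free[OF cyjk Hne] by blast
  have w0H: "w0 \<in> Hjk" using w0 unfolding hole_source_def by blast
  obtain x3 y3 where nb3: "N Hjk w0 = {x3, y3}" "x3 \<noteq> y3" "anc x3 y3"
    using source_nbrs[OF cyjk w0H w0] by blast
  obtain w' where g3: "N Hjk x3 = {w0, w'}" "w' \<noteq> w0" "hole_source c S Hjk w'"
    using GHL[OF cyjk w0H w0 nb3] by blast
  have x3S: "x3 \<in> S" using nb3(1) HjkS unfolding N_def by blast
  have "A x3 w0" "A x3 w'" using g3(1) unfolding N_def by blast+
  moreover have "w0 = u \<or> w0 = v" "w' = u \<or> w' = v" using allsrc w0 g3(3) by blast+
  ultimately have "A x3 u" "A x3 v" using g3(2) by auto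
  then show False using Th3 x3S by blast
qed

lemma th_main: assumes cy: "cyc H" and ne: "H \<noteq> {}"
  shows "is_pivot r p c S H u \<longleftrightarrow> \<not> is_pivot r p c S H v"
proof -
  obtain s a b where P: "is_pivot r p c S H s" "N H s = {a, b}" "a \<noteq> b" "hole_source c S H a"
    "hole_source c S H b" "\<forall>w. hole_source c S H w \<longrightarrow> w \<in> {a,b}"
    "\<forall>w\<in>H. w \<noteq> a \<longrightarrow> w \<noteq> b \<longrightarrow> anc s w"
    using pivot_exists[OF cy ne] by blast
  have sH: "s \<in> H" using P(1) unfolding is_pivot_def hole_sink_def by blast
  have HS: "H \<subseteq> S" using cycD(2)[OF cy] .
  have suv: "s = u \<or> s = v"
  proof (rule ccontr)
    assume su: "\<not> (s = u \<or> s = v)"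
    then have su': "s \<notin> {u,v}" by blast
    have abH: "A s a" "A s b" "a \<in> H" "b \<in> H" using P(2) unfolding N_def by blast+
    show False
    proof (cases "a \<in> {u,v}")
      case False
      then show False using core[OF cy sH su' P(2) P(3) P(6) P(4) P(7)] by blast
    next
      case True
      show False
      proof (cases "b \<in> {u,v}")
        case False
        have N': "N H s = {b, a}" using P(2) by blast
        have ac: "\<forall>w\<in>H. w \<noteq> b \<longrightarrow> w \<noteq> a \<longrightarrow> anc s w" using P(7) by blast
        have sc: "\<forall>w. hole_source c S H w \<longrightarrow> w \<in> {b,a}" using P(6) by blast
        show False using core[OF cy sH su' N' P(3)[symmetric] sc P(5) ac False] .
      next
        case True
        then have "A s u" "A s v" using \<open>a \<in> {u,v}\<close> P(3) abH by auto
        then show False using Th3 sH HS by blast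
      qed
    qed
  qed
  show ?thesis
  proof
    assume pu: "is_pivot r p c S H u"
    show "\<not> is_pivot r p c S H v"
    proof
      assume "is_pivot r p c S H v"
      then have "u = v" using pivot_unique[OF cy pu] by blast
      then show False using uv_ne by blast
    qed
  next
    assume nv: "\<not> is_pivot r p c S H v"
    have "s \<noteq> v"
    proof
      assume "s = v" then have "is_pivot r p c S H v" using P(1) by simp
      then show False using nv by blast
    qed
    then have "s = u" using suv by blast
    then show "is_pivot r p c S H u" using P(1) by simp
  qed
qed

end

theorem lemma6p4:
  fixes V S H :: "'a set" and r u v :: 'a
    and p l :: "'a \<Rightarrow> 'a" and c :: "'a \<Rightarrow> 'a set"
  assumes "burling_tree V r p l c"
    and "S \<subseteq> V"
    and "long_theta S (uadj c S) u v"
    and "is_hole S (uadj c S) H"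
  shows "is_pivot r p c S H u \<longleftrightarrow> \<not> is_pivot r p c S H v"
proof -
  interpret bts V r p l c S
    by unfold_locales (use assms(1,2) in blast)+
  obtain P1 P2 P3 where LT:
     "is_path_between (uadj c S) P1 u v" "is_path_between (uadj c S) P2 u v" "is_path_between (uadj c S) P3 u v"
     "length P1 \<ge> 4" "length P2 \<ge> 4" "length P3 \<ge> 4"
     "set P1 \<inter> set P2 = {u, v}" "set P1 \<inter> set P3 = {u, v}" "set P2 \<inter> set P3 = {u, v}"
     "S = set P1 \<union> set P2 \<union> set P3"
     "\<forall>x\<in>S. \<forall>y\<in>S. uadj c S x y \<longleftrightarrow> (consec P1 x y \<or> consec P2 x y \<or> consec P3 x y)"
    using assms(3) unfolding long_theta_def
    apply (elim exE conjE)
    subgoal for P1 P2 P3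
      apply (rule that[of P1 P2 P3])
                apply assumption+
      done
    done
  define Q where "Q = (\<lambda>i::nat. if i = 0 then P1 else if i = 1 then P2 else P3)"
  have Q012: "Q 0 = P1" "Q 1 = P2" "Q 2 = P3" unfolding Q_def by simp_all
  have i3: "i = 0 \<or> i = 1 \<or> i = 2" if "i < (3::nat)" for i using that by linarith
  interpret th V r p l c S Q u v
  proof unfold_locales
    fix i :: nat assume "i < 3"
    then show "is_path_between (uadj c S) (Q i) u v" using i3[OF \<open>i<3\<close>] LT(1-3) Q012 by auto
  next
    fix i :: nat assume "i < 3"
    then show "length (Q i) \<ge> 4" using i3[OF \<open>i<3\<close>] LT(4-6) Q012 by auto
  next
    fix i j :: nat assume h: "i < 3" "j < 3" "i \<noteq> j"
    have "i = 0 \<or> i = 1 \<or> i = 2" "j = 0 \<or> j = 1 \<or> j = 2" using i3 h by blast+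
    then show "set (Q i) \<inter> set (Q j) = {u, v}" using h LT(7-9) Q012 by (elim disjE) (simp_all add: Int_commute)
  next
    show "S = set (Q 0) \<union> set (Q 1) \<union> set (Q 2)" using LT(10) Q012 by simp
  next
    fix x y assume xy: "x \<in> S" "y \<in> S"
    have "(\<exists>i<3. consec (Q i) x y) \<longleftrightarrow> (consec P1 x y \<or> consec P2 x y \<or> consec P3 x y)"
    proof
      assume "\<exists>i<3. consec (Q i) x y"
      then obtain i where "i < 3" "consec (Q i) x y" by blast
      then show "consec P1 x y \<or> consec P2 x y \<or> consec P3 x y" using i3[OF \<open>i<3\<close>] Q012 by auto
    next
      assume "consec P1 x y \<or> consec P2 x y \<or> consec P3 x y"
      then show "\<exists>i<3. consec (Q i) x y"
      proof (elim disjE)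
        assume "consec P1 x y" then show ?thesis using Q012 by (intro exI[of _ 0]) simp
      next
        assume "consec P2 x y" then show ?thesis using Q012 by (intro exI[of _ 1]) simp
      next
        assume "consec P3 x y" then show ?thesis using Q012 by (intro exI[of _ 2]) simp
      qed
    qed
    then show "uadj c S x y \<longleftrightarrow> (\<exists>i<3. consec (Q i) x y)" using LT(11) xy by blast
  qed
  have cy: "cyc H" using hole_cyc assms(4) by blast
  have "H \<noteq> {}"
  proof -
    obtain cs where "length cs \<ge> 4" "set cs = H" using assms(4) unfolding is_hole_def by blast
    then show ?thesis by auto
  qed
  then show ?thesis using th_main cy by blast
qed


end
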